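(* Let $M_n$ be the magnetization of the Curie–Weiss model $\mathbb{CW}_{0,1}$ and let $W_\infty$ be a random variable with density $e^{-x^4/12}/\int_{\mathbb{R}}e^{-u^4/12}du$. Then for all $n$ large enough, $$\sup_{a\in\mathbb{R}}\left|\mathbb{P}\!\left[\frac{M_n}{n^{3/4}}\le a\right]-\mathbb{P}[W_\infty\le a]\right|\le 11\,n^{-1/2}.$$
   Context: The Curie–Weiss measure $\mathbb{CW}_{0,1}$ on $\sigma:\{1,\dots,n\}\to\{\pm1\}$ gives to $\sigma$ probability proportional to $\exp\big(\frac{1}{2n}(\sum_{i=1}^n\sigma(i))^2\big)$; $M_n=\sum_{i=1}^n\sigma(i)$. *)

theory Defs
  imports "HOL-Analysis.Analysis"
begin

definition cw_configs :: "nat \<Rightarrow> (nat \<Rightarrow> int) set" where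
  "cw_configs n = PiE {1..n} (\<lambda>_. {-1, 1})"

definition magnetization :: "nat \<Rightarrow> (nat \<Rightarrow> int) \<Rightarrow> real" where
  "magnetization n \<sigma> = real_of_int (\<Sum>i\<in>{1..n}. \<sigma> i)"

text \<open>Unnormalised Curie-Weiss weight (beta = 1, h = 0): exp(M_n^2/(2n)).\<close>
definition cw_weight :: "nat \<Rightarrow> (nat \<Rightarrow> int) \<Rightarrow> real" where
  "cw_weight n \<sigma> = exp ((magnetization n \<sigma>)\<^sup>2 / (2 * real n))"

definition cw_prob :: "nat \<Rightarrow> ((nat \<Rightarrow> int) \<Rightarrow> bool) \<Rightarrow> real" where
  "cw_prob n P = (\<Sum>\<sigma>\<in>{\<sigma>\<in>cw_configs n. P \<sigma>}. cw_weight n \<sigma>) / (\<Sum>\<sigma>\<in>cw_configs n. cw_weight n \<sigma>)"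

definition W_inf_cdf :: "real \<Rightarrow> real" where
  "W_inf_cdf a = (LINT x:{..a}|lborel. exp (- (x ^ 4) / 12)) / (LINT u|lborel. exp (- (u ^ 4) / 12))"

end

theory Submission
  imports Defs "HOL-Probability.Probability" "HOL-Real_Asymp.Real_Asymp"
begin


definition ff :: "real \<Rightarrow> real" where "ff x = exp (- (x ^ 4) / 12)"
definition gg :: "real \<Rightarrow> real" where "gg x = exp (- (x ^ 4) / 24)"

lemma ff_pos: "0 < ff x" by (simp add: ff_def)
lemma ff_le1: "ff x \<le> 1" by (simp add: ff_def)
lemma ff_even: "ff (- x) = ff x" by (simp add: ff_def)

lemma ff_meas[measurable]: "ff \<in> borel_measurable borel"
  unfolding ff_def by measurable
lemma gg_meas[measurable]: "gg \<in> borel_measurable borel"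
  unfolding gg_def by measurable

lemma integrable_gg: "integrable lborel gg"
proof (rule Bochner_Integration.integrable_bound)
  show "integrable lborel (\<lambda>x. (exp (3/2) * sqrt (2*pi)) * normal_density 0 1 x)"
    by (intro integrable_mult_right) auto
  show "gg \<in> borel_measurable lborel" by simp
  show "AE x in lborel. norm (gg x) \<le> norm (exp (3/2) * sqrt (2*pi) * normal_density 0 1 x)"
  proof (intro AE_I2)
    fix x :: real
    have "(x^2 - 6)^2 \<ge> 0" by simp
    hence "- (x ^ 4) / 24 \<le> 3/2 + (- x\<^sup>2 / 2)" by (simp add: power2_eq_square power4_eq_xxxx algebra_simps)
    hence "gg x \<le> exp (3/2 + (- x\<^sup>2 / 2))" unfolding gg_def by simp
    also have "\<dots> = exp (3/2) * exp (- x\<^sup>2 / 2)" by (rule exp_add)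
    also have "\<dots> = exp (3/2) * sqrt (2*pi) * normal_density 0 1 x"
      by (simp add: std_normal_density_def)
    finally show "norm (gg x) \<le> norm (exp (3/2) * sqrt (2*pi) * normal_density 0 1 x)"
      by (simp add: gg_def normal_density_def)
  qed
qed

lemma ff_le_gg: "ff x \<le> exp (- (T ^ 4) / 24) * gg x" if "T ^ 4 \<le> x ^ 4" for x T :: real
proof -
  have "ff x = exp (- (x^4)/24) * exp (- (x^4)/24)" unfolding ff_def by (subst exp_add[symmetric]) simp
  also have "\<dots> \<le> exp (- (T^4)/24) * gg x" unfolding gg_def
    by (intro mult_right_mono) (use that in auto)
  finally show ?thesis .
qed

lemma integrable_ff: "integrable lborel ff"
  by (rule Bochner_Integration.integrable_bound[OF integrable_gg]) (auto simp: ff_def gg_def)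

definition Phi :: "real \<Rightarrow> real" where "Phi a = (LINT x:{..a}|lborel. ff x)"
definition ZZ :: real where "ZZ = (LINT x|lborel. ff x)"
definition GG :: real where "GG = (LINT x|lborel. gg x)"

lemma si_ff: "set_integrable lborel A ff" if "A \<in> sets borel" for A
  unfolding set_integrable_def using that by (intro integrable_mult_indicator integrable_ff) auto
lemma si_gg: "set_integrable lborel A gg" if "A \<in> sets borel" for A
  unfolding set_integrable_def using that by (intro integrable_mult_indicator integrable_gg) auto

lemma set_int_le_full:
  fixes f :: "real \<Rightarrow> real"
  assumes "integrable lborel f" "\<And>x. 0 \<le> f x" "A \<in> sets borel"
  shows "(LINT x:A|lborel. f x) \<le> (LINT x|lborel. f x)"
  unfolding set_lebesgue_integral_def
  using assms by (intro integral_mono integrable_mult_indicator) (auto split: split_indicator)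

lemma set_int_nonneg:
  fixes f :: "real \<Rightarrow> real"
  assumes "\<And>x. 0 \<le> f x"
  shows "0 \<le> (LINT x:A|lborel. f x)"
  unfolding set_lebesgue_integral_def
  using assms by (intro Bochner_Integration.integral_nonneg) (auto split: split_indicator)

lemma GG_nonneg: "0 \<le> GG" unfolding GG_def by (intro Bochner_Integration.integral_nonneg) (auto simp: gg_def)

lemma Phi_le_ZZ: "Phi a \<le> ZZ"
  unfolding Phi_def ZZ_def by (rule set_int_le_full[OF integrable_ff]) (auto intro: less_imp_le[OF ff_pos])

lemma Phi_nonneg: "0 \<le> Phi a"
  unfolding Phi_def by (rule set_int_nonneg) (auto intro: less_imp_le[OF ff_pos])

lemma Phi_split: "Phi b = Phi a + integral {a..b} ff" if "a \<le> b" for a b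
proof -
  have un: "{..b} = {..a} \<union> {a<..b}" using that by auto
  have "Phi b = (LINT x:{..a}|lborel. ff x) + (LINT x:{a<..b}|lborel. ff x)"
    unfolding Phi_def un by (rule set_integral_Un) (auto intro!: si_ff)
  also have "(LINT x:{a<..b}|lborel. ff x) = integral {a<..b} ff"
    by (rule set_borel_integral_eq_integral(2)) (auto intro!: si_ff)
  also have "integral {a<..b} ff = integral {a..b} ff"
    by (rule integral_spike_set) (auto intro: negligible_subset[of "{a}"])
  finally show ?thesis unfolding Phi_def by simp
qed

lemma ff_integrable_on: "ff integrable_on {a..b}"
  by (rule set_borel_integral_eq_integral(1)) (auto intro!: si_ff)

lemma Phi_tail_left: "Phi (- T) \<le> exp (- (T ^ 4) / 24) * GG" if "T \<ge> 0" for T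
proof -
  have "Phi (-T) \<le> (LINT x:{..-T}|lborel. exp (- (T ^ 4) / 24) * gg x)"
    unfolding Phi_def
  proof (rule set_integral_mono)
    show "set_integrable lborel {..- T} (\<lambda>x. exp (- (T ^ 4) / 24) * gg x)"
      using integrable_mult_right[OF si_gg[of "{..-T}", unfolded set_integrable_def], of "exp (- (T ^ 4) / 24)"]
      unfolding set_integrable_def by (simp add: ac_simps)
    fix x assume "x \<in> {..-T}"
    hence "T \<le> - x" by auto
    hence "T^4 \<le> (-x)^4" using that by (intro power_mono) auto
    thus "ff x \<le> exp (- (T ^ 4) / 24) * gg x" by (intro ff_le_gg) simp
  qed (auto intro: si_ff)
  also have "\<dots> = exp (- (T ^ 4) / 24) * (LINT x:{..-T}|lborel. gg x)"
    by (simp add: set_integral_mult_right)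
  also have "\<dots> \<le> exp (- (T ^ 4) / 24) * GG"
    unfolding GG_def by (intro mult_left_mono set_int_le_full integrable_gg) (auto simp: gg_def)
  finally show ?thesis .
qed

lemma ZZ_split: "ZZ = Phi a + (LINT x:{a<..}|lborel. ff x)"
proof -
  have "ZZ = (LINT x:{..a} \<union> {a<..}|lborel. ff x)"
    unfolding ZZ_def set_lebesgue_integral_def
    by (intro Bochner_Integration.integral_cong) (auto split: split_indicator)
  also have "\<dots> = Phi a + (LINT x:{a<..}|lborel. ff x)"
    unfolding Phi_def by (rule set_integral_Un) (auto intro!: si_ff)
  finally show ?thesis .
qed

lemma Phi_tail_right: "ZZ - Phi T \<le> exp (- (T ^ 4) / 24) * GG" if "T \<ge> 0" for T
proof -
  have "ZZ - Phi T = (LINT x:{T<..}|lborel. ff x)" using ZZ_split[of T] by simp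
  also have "\<dots> \<le> (LINT x:{T<..}|lborel. exp (- (T ^ 4) / 24) * gg x)"
  proof (rule set_integral_mono)
    show "set_integrable lborel {T<..} (\<lambda>x. exp (- (T ^ 4) / 24) * gg x)"
      using integrable_mult_right[OF si_gg[of "{T<..}", unfolded set_integrable_def], of "exp (- (T ^ 4) / 24)"]
      unfolding set_integrable_def by (simp add: ac_simps)
    fix x assume "x \<in> {T<..}"
    hence "T^4 \<le> x^4" using that by (intro power_mono) auto
    thus "ff x \<le> exp (- (T ^ 4) / 24) * gg x" by (intro ff_le_gg) simp
  qed (auto intro: si_ff)
  also have "\<dots> = exp (- (T ^ 4) / 24) * (LINT x:{T<..}|lborel. gg x)"
    by (simp add: set_integral_mult_right)
  also have "\<dots> \<le> exp (- (T ^ 4) / 24) * GG"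
    unfolding GG_def by (intro mult_left_mono set_int_le_full integrable_gg) (auto simp: gg_def)
  finally show ?thesis .
qed

lemma W_inf_cdf_eq: "W_inf_cdf a = Phi a / ZZ"
  unfolding W_inf_cdf_def Phi_def ZZ_def ff_def ..

lemma integral_ff_le_ZZ: "integral {a..b} ff \<le> ZZ" if "a \<le> b"
  using Phi_split[OF that] Phi_le_ZZ[of b] Phi_nonneg[of a] by linarith

lemma ff_int_lower: "integral {-1..1} ff \<ge> 2 * exp (- 1 / 12)"
proof -
  have le: "exp (- 1 / 12) \<le> ff x" if "x \<in> {-1..1}" for x :: real
  proof -
    from that have "\<bar>x\<bar> \<le> 1" by auto
    hence "x^4 \<le> 1" using power_mono[of "\<bar>x\<bar>" 1 4] by simp
    thus "exp (- 1 / 12) \<le> ff x" unfolding ff_def by simp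
  qed
  have "integral {-1..1} (\<lambda>x::real. exp (- 1 / 12)) \<le> integral {-1..1} ff"
    by (rule Henstock_Kurzweil_Integration.integral_le[OF integrable_const_ivl ff_integrable_on le])
  thus ?thesis by simp
qed

lemma ZZ_pos: "ZZ > 0"
proof -
  have "0 < 2 * exp (- 1 / 12 :: real)" by simp
  also have "\<dots> \<le> ZZ" using ff_int_lower integral_ff_le_ZZ[of "-1" 1] by linarith
  finally show ?thesis .
qed


lemma sq_lt1: "0 < x \<Longrightarrow> x < 1 \<Longrightarrow> 1 - x^2 > (0::real)"
  by (simp add: power_less_one_iff)

lemma log_ineq1:
  fixes t :: real
  assumes "0 \<le> t" "t < 1"
  shows "ln (1 - t) - ln (1 + t) \<le> - 2 * t - 2/3 * t^3"
proof -
  define \<phi> where "\<phi> x = ln (1 - x) - ln (1 + x) + 2 * x + 2/3 * x^3" for x :: real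
  have "\<phi> t \<le> \<phi> 0"
  proof (rule DERIV_nonpos_imp_decreasing_open[OF assms(1)])
    fix x :: real assume x: "0 < x" "x < t"
    have "(\<phi> has_real_derivative (- 1 / (1 - x) - 1 / (1 + x) + 2 + 2 * x^2)) (at x)"
    proof -
      have x1: "x < 1" "-1 < x" "0 < 1 + x" "0 < 1 - x" using x assms by auto
      show ?thesis unfolding \<phi>_def by (rule derivative_eq_intros refl | simp add: x1)+
    qed
    moreover have "- 1 / (1 - x) - 1 / (1 + x) + 2 + 2 * x^2 = - 2 * x^4 / (1 - x^2)"
    proof -
      have a: "1 - x \<noteq> 0" "1 + x \<noteq> 0" using x assms by auto
      have b: "1 - x^2 = (1-x)*(1+x)" by (simp add: power2_eq_square algebra_simps)
      show ?thesis unfolding b using a by (simp add: divide_simps) algebra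
    qed
    moreover have "- 2 * x^4 / (1 - x^2) \<le> 0"
      using sq_lt1[of x] x assms by (intro divide_nonpos_pos) auto
    ultimately show "\<exists>y. (\<phi> has_real_derivative y) (at x) \<and> y \<le> 0" by auto
  next
    show "continuous_on {0..t} \<phi>" unfolding \<phi>_def using assms
      by (intro continuous_intros) auto
  qed
  thus ?thesis unfolding \<phi>_def by simp
qed

lemma log_ineq2:
  fixes t :: real
  assumes "0 \<le> t" "t \<le> 1/2"
  shows "ln (1 - t) - ln (1 + t) \<ge> - 2 * t - 2/3 * t^3 - 8/15 * t^5"
proof -
  define \<phi> where "\<phi> x = ln (1 - x) - ln (1 + x) + 2 * x + 2/3 * x^3 + 8/15 * x^5" for x :: real
  have "\<phi> 0 \<le> \<phi> t"
  proof (rule DERIV_nonneg_imp_increasing_open[OF assms(1)])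
    fix x :: real assume x: "0 < x" "x < t"
    have "(\<phi> has_real_derivative (- 1 / (1 - x) - 1 / (1 + x) + 2 + 2 * x^2 + 8/3 * x^4)) (at x)"
    proof -
      have x1: "x < 1" "-1 < x" "0 < 1 + x" "0 < 1 - x" using x assms by auto
      show ?thesis unfolding \<phi>_def by (rule derivative_eq_intros refl | simp add: x1)+
    qed
    moreover have "- 1 / (1 - x) - 1 / (1 + x) + 2 + 2 * x^2 + 8/3 * x^4 = x^4 * (2 - 8 * x^2) / (3 * (1 - x^2))"
    proof -
      have a: "1 - x \<noteq> 0" "1 + x \<noteq> 0" using x assms by auto
      have b: "1 - x^2 = (1-x)*(1+x)" by (simp add: power2_eq_square algebra_simps)
      show ?thesis unfolding b using a by (simp add: divide_simps) algebra
    qed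
    moreover have "x^4 * (2 - 8 * x^2) / (3 * (1 - x^2)) \<ge> 0"
    proof -
      have "x^2 \<le> 1/4" using x assms power_mono[of x "1/2" 2] by (simp add: power2_eq_square)
      thus ?thesis using sq_lt1[of x] x assms by (intro divide_nonneg_pos mult_nonneg_nonneg) auto
    qed
    ultimately show "\<exists>y. (\<phi> has_real_derivative y) (at x) \<and> y \<ge> 0" by auto
  next
    show "continuous_on {0..t} \<phi>" unfolding \<phi>_def using assms
      by (intro continuous_intros) auto
  qed
  thus ?thesis unfolding \<phi>_def by simp
qed


definition mm :: "nat \<Rightarrow> nat \<Rightarrow> real" where "mm n k = 2 * real k - real n"
definition Lg :: "nat \<Rightarrow> nat \<Rightarrow> real" where
  "Lg n k = ln (real (n choose k)) + (mm n k)^2 / (2 * real n) + (mm n k)^4 / (12 * real n ^ 3)"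
definition dl :: "nat \<Rightarrow> nat \<Rightarrow> real" where
  "dl n k = ln (real (n - k)) - ln (real k + 1) + ((mm n k + 2)^2 - (mm n k)^2)/(2*real n)
     + ((mm n k + 2)^4 - (mm n k)^4)/(12 * real n^3)"

lemma binom_step: "k < n \<Longrightarrow> real (Suc k) * real (n choose Suc k) = real (n - k) * real (n choose k)"
proof -
  have "Suc k * (n choose Suc k) = (n - k) * (n choose k)"
    using binomial_absorption[of k n] binomial_absorb_comp[of n k] by simp
  thus ?thesis by (metis of_nat_mult)
qed

lemma Lg_step: assumes "k < n" shows "Lg n (Suc k) = Lg n k + dl n k"
proof -
  have b: "real (n choose Suc k) = real (n - k) * real (n choose k) / (real k + 1)"
    using binom_step[OF assms] by (simp add: field_simps)
  have p1: "real (n choose k) > 0" "real (n - k) > 0" using assms by auto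
  have "ln (real (n choose Suc k)) = ln (real (n - k)) + ln (real (n choose k)) - ln (real k + 1)"
    unfolding b using p1 by (simp add: ln_div ln_mult)
  moreover have "mm n (Suc k) = mm n k + 2" unfolding mm_def by simp
  ultimately show ?thesis unfolding Lg_def dl_def by (simp add: algebra_simps diff_divide_distrib add_divide_distrib)
qed

lemma dl_alt:
  assumes "k < n"
  defines "v \<equiv> mm n k + 1"
  shows "dl n k = ln (1 - v / (real n + 1)) - ln (1 + v / (real n + 1))
          + 2 * (v / n) + 2/3 * (v / n)^3 + 2/3 * (v / n) / (real n)^2"
proof -
  have n0: "real n > 0" using assms by simp
  have e1: "1 - v / (real n + 1) = 2 * real (n - k) / (real n + 1)"
    unfolding v_def mm_def using assms by (simp add: field_simps of_nat_diff)
  have e2: "1 + v / (real n + 1) = 2 * (real k + 1) / (real n + 1)"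
    unfolding v_def mm_def by (simp add: field_simps)
  have "ln (1 - v / (real n + 1)) - ln (1 + v / (real n + 1)) = ln (real (n - k)) - ln (real k + 1)"
  proof -
    have a: "real (n - k) > 0" "real k + 1 > 0" "real n + 1 > 0" "real n - real k > 0" using assms by auto
    have "ln (2 * real (n - k) / (real n + 1)) = ln 2 + ln (real (n - k)) - ln (real n + 1)"
      using a ln_div[of "2 * real (n - k)" "real n + 1"] ln_mult[of 2 "real (n - k)"] by simp
    moreover have "ln (2 * (real k + 1) / (real n + 1)) = ln 2 + ln (real k + 1) - ln (real n + 1)"
      using a ln_div[of "2 * (real k + 1)" "real n + 1"] ln_mult[of 2 "real k + 1"] by simp
    ultimately show ?thesis unfolding e1 e2 by linarith
  qed
  moreover have "((mm n k + 2)^2 - (mm n k)^2)/(2*real n) + ((mm n k + 2)^4 - (mm n k)^4)/(12 * real n^3)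
     = 2 * (v / n) + 2/3 * (v / n)^3 + 2/3 * (v / n) / (real n)^2"
  proof -
    have m: "mm n k = v - 1" unfolding v_def by simp
    show ?thesis unfolding m using n0 by (simp add: field_simps) algebra
  qed
  ultimately show ?thesis unfolding dl_def by linarith
qed

lemma dl_upper:
  assumes "k < n" "0 \<le> mm n k + 1"
  shows "dl n k \<le> 5 * ((mm n k + 1) / n) / n"
proof -
  define v where "v = mm n k + 1"
  define u where "u = v / n"
  define t where "t = v / (real n + 1)"
  have n1: "real n \<ge> 1" using assms by simp
  have v0: "0 \<le> v" using assms v_def by simp
  have vle: "v \<le> real n - 1" unfolding v_def mm_def using assms by simp
  have u0: "0 \<le> u" "u \<le> 1" unfolding u_def using v0 vle n1 by (auto simp: field_simps)
  have t0: "0 \<le> t" "t < 1" unfolding t_def using v0 vle n1 by (auto simp: field_simps)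
  have tu: "t \<le> u" unfolding t_def u_def using v0 n1 by (intro divide_left_mono) auto
  have q: "u - t \<le> u / n"
  proof -
    have "u - t = u / (real n + 1)" unfolding u_def t_def using n1 by (simp add: field_simps)
    also have "\<dots> \<le> u / n" using u0 n1 by (intro divide_left_mono) auto
    finally show ?thesis .
  qed
  have c3: "u^3 - t^3 \<le> 3 * (u - t)"
  proof -
    have "u^3 - t^3 = (u - t) * (u^2 + u*t + t^2)" by (simp add: power2_eq_square power3_eq_cube algebra_simps)
    also have "\<dots> \<le> (u - t) * 3"
    proof (rule mult_left_mono)
      have "u^2 \<le> 1" "u * t \<le> 1" "t^2 \<le> 1" using u0 t0 tu
        by (auto simp: power_le_one mult_le_one)
      thus "u^2 + u*t + t^2 \<le> 3" by linarith
    qed (use tu in auto)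
    finally show ?thesis by simp
  qed
  have l: "ln (1 - t) - ln (1 + t) \<le> - 2 * t - 2/3 * t^3" by (rule log_ineq1[OF t0])
  have r: "2/3 * u / (real n)^2 \<le> u / n"
  proof -
    have a0: "0 \<le> u / (real n)^2" using u0 by simp
    have "2/3 * u / (real n)^2 = 2/3 * (u / (real n)^2)" by simp
    hence "2/3 * u / (real n)^2 \<le> u / (real n)^2" using a0 by linarith
    also have "\<dots> \<le> u / n" using u0 n1 by (intro divide_left_mono) (auto simp: power2_eq_square)
    finally show ?thesis .
  qed
  have "dl n k = ln (1 - t) - ln (1 + t) + 2 * u + 2/3 * u^3 + 2/3 * u / (real n)^2"
    using dl_alt[OF assms(1)] unfolding u_def t_def v_def by simp
  also have "\<dots> \<le> 5 * (u / n)"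
  proof -
    define R where "R = 2/3 * u / (real n)^2"
    define U where "U = u / n"
    have "ln (1 - t) - ln (1 + t) + 2 * u + 2/3 * u^3 + R \<le> 5 * U"
      using l r q c3 unfolding R_def[symmetric] U_def[symmetric] by argo
    thus ?thesis unfolding R_def U_def .
  qed
  finally show ?thesis unfolding u_def v_def by simp
qed

lemma dl_lower:
  assumes "k < n" "0 \<le> mm n k + 1" "(mm n k + 1) / n \<le> 1/2"
  shows "dl n k \<ge> - 8/15 * ((mm n k + 1) / n)^5"
proof -
  define v where "v = mm n k + 1"
  define u where "u = v / n"
  define t where "t = v / (real n + 1)"
  have n1: "real n \<ge> 1" using assms by simp
  have v0: "0 \<le> v" using assms v_def by simp
  have u0: "0 \<le> u" "u \<le> 1/2" unfolding u_def using v0 n1 assms(3) v_def by auto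
  have t0: "0 \<le> t" unfolding t_def using v0 n1 by auto
  have tu: "t \<le> u" unfolding t_def u_def using v0 n1 by (intro divide_left_mono) auto
  have l: "ln (1 - t) - ln (1 + t) \<ge> - 2 * t - 2/3 * t^3 - 8/15 * t^5" by (rule log_ineq2) (use t0 tu u0 in auto)
  have p: "t^3 \<le> u^3" "t^5 \<le> u^5" using t0 tu by (auto intro: power_mono)
  have r: "0 \<le> 2/3 * u / (real n)^2" using u0 by simp
  have "dl n k = ln (1 - t) - ln (1 + t) + 2 * u + 2/3 * u^3 + 2/3 * u / (real n)^2"
    using dl_alt[OF assms(1)] unfolding u_def t_def v_def by simp
  also have "\<dots> \<ge> - 8/15 * u^5" using l p r tu by linarith
  finally show ?thesis unfolding u_def v_def by simp
qed


definition k0 :: "nat \<Rightarrow> nat" where "k0 n = (n + 1) div 2"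

lemma k0_le: "n \<ge> 1 \<Longrightarrow> k0 n \<le> n" unfolding k0_def by simp

lemma mm_k0: "mm n (k0 n) = 0 \<or> mm n (k0 n) = 1"
proof -
  have "2 * ((n + 1) div 2) = n \<or> 2 * ((n + 1) div 2) = n + 1" by presburger
  thus ?thesis unfolding mm_def k0_def
    by (metis add_diff_cancel_left' diff_self of_nat_1 of_nat_add of_nat_mult of_nat_numeral)
qed

lemma mm_k0_nonneg: "mm n (k0 n) \<ge> 0" using mm_k0[of n] by auto

lemma mm_shift: "mm n (k0 n + i) = mm n (k0 n) + 2 * real i"
  unfolding mm_def by simp

lemma sum_lin: "0 \<le> (e::real) \<Longrightarrow> (\<Sum>i<J. e + 2 * real i + 1) \<le> (e + 2 * real J)^2 / 4"
proof (induction J)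
  case 0 thus ?case by simp
next
  case (Suc J)
  have "(\<Sum>i<Suc J. e + 2 * real i + 1) \<le> (e + 2 * real J)^2 / 4 + (e + 2 * real J + 1)"
    using Suc by simp
  also have "\<dots> \<le> (e + 2 * real (Suc J))^2 / 4" by (simp add: power2_eq_square field_simps)
  finally show ?case .
qed

lemma poly6: "0 \<le> (z::real) \<Longrightarrow> z^6 / 6 + (z + 1)^5 \<le> (z + 2)^6 / 6"
proof -
  assume z: "0 \<le> z"
  have "(z + 2)^6 - z^6 - 6 * (z+1)^5 = 6*z^5 + 30*z^4 + 100*z^3 + 180*z^2 + 162*z + 58"
    by (simp add: power2_eq_square power3_eq_cube power4_eq_xxxx algebra_simps eval_nat_numeral)
  moreover have "6*z^5 + 30*z^4 + 100*z^3 + 180*z^2 + 162*z + 58 \<ge> 0" using z by simp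
  ultimately show ?thesis by simp
qed

lemma sum_5: "0 \<le> (e::real) \<Longrightarrow> (\<Sum>i<J. (e + 2 * real i + 1)^5) \<le> (e + 2 * real J)^6 / 6"
proof (induction J)
  case 0 thus ?case by simp
next
  case (Suc J)
  have "(\<Sum>i<Suc J. (e + 2 * real i + 1)^5) \<le> (e + 2 * real J)^6 / 6 + (e + 2 * real J + 1)^5"
    using Suc by simp
  also have "\<dots> \<le> (e + 2 * real J + 2)^6 / 6" using poly6[of "e + 2 * real J"] Suc.prems by simp
  finally show ?case by (simp add: algebra_simps)
qed

lemma Lg_sum: assumes "k0 n + J \<le> n"
  shows "Lg n (k0 n + J) - Lg n (k0 n) = (\<Sum>i<J. dl n (k0 n + i))"
  using assms
proof (induction J)
  case 0 thus ?case by simp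
next
  case (Suc J)
  have "Lg n (k0 n + Suc J) = Lg n (k0 n + J) + dl n (k0 n + J)"
    using Lg_step[of "k0 n + J" n] Suc.prems by simp
  thus ?case using Suc by simp
qed

lemma E_upper_right:
  assumes "k0 n \<le> k" "k \<le> n" "n \<ge> 1"
  shows "Lg n k - Lg n (k0 n) \<le> 5/4 * (mm n k)^2 / (real n)^2"
proof -
  define J where "J = k - k0 n"
  define e where "e = mm n (k0 n)"
  have k: "k = k0 n + J" using assms J_def by simp
  have e0: "0 \<le> e" using mm_k0_nonneg e_def by simp
  have n1: "real n \<ge> 1" using assms by simp
  have "Lg n k - Lg n (k0 n) = (\<Sum>i<J. dl n (k0 n + i))" using Lg_sum assms k by simp
  also have "\<dots> \<le> (\<Sum>i<J. 5 / (real n)^2 * (e + 2 * real i + 1))"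
  proof (rule sum_mono)
    fix i assume "i \<in> {..<J}"
    hence lt: "k0 n + i < n" using k assms by simp
    have "dl n (k0 n + i) \<le> 5 * ((mm n (k0 n + i) + 1) / n) / n"
      by (rule dl_upper[OF lt]) (use mm_shift[of n i] e0 e_def in simp)
    thus "dl n (k0 n + i) \<le> 5 / (real n)^2 * (e + 2 * real i + 1)"
      using mm_shift[of n i] unfolding e_def by (simp add: power2_eq_square)
  qed
  also have "\<dots> = 5 / (real n)^2 * (\<Sum>i<J. (e + 2 * real i + 1))" by (simp add: sum_distrib_left)
  also have "\<dots> \<le> 5 / (real n)^2 * ((e + 2 * real J)^2 / 4)"
    by (intro mult_left_mono sum_lin e0) auto
  also have "e + 2 * real J = mm n k" unfolding k e_def by (simp add: mm_shift)
  finally show ?thesis by simp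
qed

lemma E_lower_right:
  assumes "k0 n \<le> k" "k \<le> n" "mm n k \<le> real n / 2" "n \<ge> 1"
  shows "Lg n k - Lg n (k0 n) \<ge> - 4/45 * (mm n k)^6 / (real n)^5"
proof -
  define J where "J = k - k0 n"
  define e where "e = mm n (k0 n)"
  have k: "k = k0 n + J" using assms J_def by simp
  have e0: "0 \<le> e" using mm_k0_nonneg e_def by simp
  have n1: "real n \<ge> 1" using assms by simp
  have ek: "e + 2 * real J = mm n k" unfolding k e_def by (simp add: mm_shift)
  have "- 4/45 * (mm n k)^6 / (real n)^5 = - 8/15 / (real n)^5 * ((e + 2 * real J)^6 / 6)"
    unfolding ek by simp
  also have "\<dots> \<le> - 8/15 / (real n)^5 * (\<Sum>i<J. (e + 2 * real i + 1)^5)"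
    by (intro mult_left_mono_neg sum_5 e0) auto
  also have "\<dots> = (\<Sum>i<J. - 8/15 * ((e + 2 * real i + 1) / n)^5)"
    by (simp add: sum_distrib_left power_divide)
  also have "\<dots> \<le> (\<Sum>i<J. dl n (k0 n + i))"
  proof (rule sum_mono)
    fix i assume "i \<in> {..<J}"
    hence lt: "k0 n + i < n" and iJ: "i < J" using k assms by auto
    have m: "mm n (k0 n + i) + 1 = e + 2 * real i + 1" using mm_shift[of n i] e_def by simp
    have "e + 2 * real i + 1 \<le> mm n k" using iJ ek by simp
    hence "(e + 2 * real i + 1) / n \<le> 1/2" using assms(3) n1 by (simp add: field_simps)
    hence "dl n (k0 n + i) \<ge> - 8/15 * ((mm n (k0 n + i) + 1) / n)^5"
      by (intro dl_lower[OF lt]) (use m e0 in auto)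
    thus "- 8/15 * ((e + 2 * real i + 1) / n)^5 \<le> dl n (k0 n + i)" unfolding m .
  qed
  also have "\<dots> = Lg n k - Lg n (k0 n)" using Lg_sum assms k by simp
  finally show ?thesis .
qed

lemma Lg_symm: "k \<le> n \<Longrightarrow> Lg n (n - k) = Lg n k"
proof -
  assume kn: "k \<le> n"
  have "mm n (n - k) = - mm n k" unfolding mm_def using kn by (simp add: of_nat_diff)
  moreover have "n choose (n - k) = n choose k" using binomial_symmetric[OF kn] by simp
  ultimately show ?thesis unfolding Lg_def by simp
qed

lemma mm_symm: "k \<le> n \<Longrightarrow> mm n (n - k) = - mm n k"
  unfolding mm_def by (simp add: of_nat_diff)

lemma E_upper:
  assumes "k \<le> n" "n \<ge> 1"
  shows "Lg n k - Lg n (k0 n) \<le> 5/4 * (mm n k)^2 / (real n)^2"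
proof (cases "k0 n \<le> k")
  case True thus ?thesis using E_upper_right assms by blast
next
  case False
  hence "k0 n \<le> n - k" "n - k \<le> n" unfolding k0_def by auto
  from E_upper_right[OF this assms(2)] show ?thesis using Lg_symm[OF assms(1)] mm_symm[OF assms(1)] by simp
qed

lemma E_abs:
  assumes "k \<le> n" "\<bar>mm n k\<bar> \<le> real n / 2" "n \<ge> 1"
  shows "\<bar>Lg n k - Lg n (k0 n)\<bar> \<le> 5/4 * (mm n k)^2 / (real n)^2 + 4/45 * (mm n k)^6 / (real n)^5"
proof -
  have lo: "Lg n k - Lg n (k0 n) \<ge> - 4/45 * (mm n k)^6 / (real n)^5"
  proof (cases "k0 n \<le> k")
    case True thus ?thesis using E_lower_right assms by auto
  next
    case False
    hence a: "k0 n \<le> n - k" "n - k \<le> n" unfolding k0_def by auto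
    have "mm n (n - k) \<le> real n / 2" using mm_symm[OF assms(1)] assms(2) by simp
    from E_lower_right[OF a this assms(3)] show ?thesis using Lg_symm[OF assms(1)] mm_symm[OF assms(1)] by simp
  qed
  have up: "Lg n k - Lg n (k0 n) \<le> 5/4 * (mm n k)^2 / (real n)^2" by (rule E_upper[OF assms(1,3)])
  have p1: "0 \<le> 5/4 * (mm n k)^2 / (real n)^2" "0 \<le> 4/45 * (mm n k)^6 / (real n)^5"
    by (auto simp: zero_le_even_power)
  show ?thesis using lo up p1 unfolding abs_le_iff by linarith
qed


lemma sum_Pow_card:
  fixes G :: "nat \<Rightarrow> real"
  assumes "finite A"
  shows "(\<Sum>S\<in>Pow A. G (card S)) = (\<Sum>k\<le>card A. real (card A choose k) * G k)"
proof -
  have "(\<Sum>S\<in>Pow A. G (card S)) = (\<Sum>k\<le>card A. \<Sum>S\<in>{S. S \<in> Pow A \<and> card S = k}. G (card S))"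
    by (rule sum.group[symmetric]) (use assms in \<open>auto intro: card_mono\<close>)
  also have "\<dots> = (\<Sum>k\<le>card A. real (card A choose k) * G k)"
  proof (rule sum.cong[OF refl])
    fix k assume "k \<in> {..card A}"
    have "(\<Sum>S\<in>{S. S \<in> Pow A \<and> card S = k}. G (card S)) = (\<Sum>S\<in>{S. S \<subseteq> A \<and> card S = k}. G k)"
      by (rule sum.cong) auto
    also have "\<dots> = real (card {S. S \<subseteq> A \<and> card S = k}) * G k" by simp
    also have "\<dots> = real (card A choose k) * G k" using n_subsets[OF assms] by simp
    finally show "(\<Sum>S\<in>{S. S \<in> Pow A \<and> card S = k}. G (card S)) = real (card A choose k) * G k" .
  qed
  finally show ?thesis .
qed

definition spin_set :: "nat \<Rightarrow> (nat \<Rightarrow> int) \<Rightarrow> nat set" where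
  "spin_set n \<sigma> = {i \<in> {1..n}. \<sigma> i = 1}"

lemma bij_spin: "bij_betw (spin_set n) (cw_configs n) (Pow {1..n})"
proof (rule bij_betwI[where g = "\<lambda>S. restrict (\<lambda>i. if i \<in> S then 1 else -1) {1..n}"])
  show "spin_set n \<in> cw_configs n \<rightarrow> Pow {1..n}" unfolding spin_set_def by auto
  show "(\<lambda>S. restrict (\<lambda>i. if i \<in> S then 1 else -1) {1..n}) \<in> Pow {1..n} \<rightarrow> cw_configs n"
    unfolding cw_configs_def by auto
  fix \<sigma> assume s: "\<sigma> \<in> cw_configs n"
  show "restrict (\<lambda>i. if i \<in> spin_set n \<sigma> then 1 else -1) {1..n} = \<sigma>"
  proof (rule ext)
    fix i show "restrict (\<lambda>i. if i \<in> spin_set n \<sigma> then 1 else -1) {1..n} i = \<sigma> i"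
      using s unfolding cw_configs_def spin_set_def PiE_def extensional_def Pi_def
      by (cases "i \<in> {1..n}") auto
  qed
next
  fix S assume "S \<in> Pow {1..n}"
  thus "spin_set n (restrict (\<lambda>i. if i \<in> S then 1 else -1) {1..n}) = S"
    unfolding spin_set_def by auto
qed

lemma magn_spin:
  assumes "\<sigma> \<in> cw_configs n"
  shows "magnetization n \<sigma> = mm n (card (spin_set n \<sigma>))"
proof -
  let ?S = "spin_set n \<sigma>"
  have fin: "finite {1..n}" by simp
  have sub: "?S \<subseteq> {1..n}" unfolding spin_set_def by auto
  have "(\<Sum>i\<in>{1..n}. \<sigma> i) = (\<Sum>i\<in>{1..n}. if i \<in> ?S then 1 else -1)"
    by (rule sum.cong) (use assms in \<open>auto simp: cw_configs_def spin_set_def\<close>)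
  also have "\<dots> = (\<Sum>i\<in>{1..n} \<inter> {x. x \<in> ?S}. 1) + (\<Sum>i\<in>{1..n} \<inter> - {x. x \<in> ?S}. -1)"
    by (rule sum.If_cases[OF fin])
  also have "{1..n} \<inter> {x. x \<in> ?S} = ?S" using sub by auto
  also have "{1..n} \<inter> - {x. x \<in> ?S} = {1..n} - ?S" by auto
  also have "(\<Sum>i\<in>?S. (1::int)) + (\<Sum>i\<in>{1..n} - ?S. -1) = int (card ?S) - int (card ({1..n} - ?S))"
    by simp
  also have "card ({1..n} - ?S) = n - card ?S" using sub by (simp add: card_Diff_subset finite_subset)
  finally have "(\<Sum>i\<in>{1..n}. \<sigma> i) = int (card ?S) - int (n - card ?S)" .
  moreover have "card ?S \<le> n" using card_mono[OF fin sub] by simp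
  ultimately show ?thesis unfolding magnetization_def mm_def by (simp add: of_nat_diff)
qed

lemma sum_configs:
  fixes F :: "real \<Rightarrow> real"
  shows "(\<Sum>\<sigma>\<in>cw_configs n. F (magnetization n \<sigma>)) = (\<Sum>k\<le>n. real (n choose k) * F (mm n k))"
proof -
  have "(\<Sum>\<sigma>\<in>cw_configs n. F (magnetization n \<sigma>)) = (\<Sum>\<sigma>\<in>cw_configs n. F (mm n (card (spin_set n \<sigma>))))"
    by (rule sum.cong) (auto simp: magn_spin)
  also have "\<dots> = (\<Sum>S\<in>Pow {1..n}. F (mm n (card S)))"
    by (rule sum.reindex_bij_betw[OF bij_spin, of "\<lambda>S. F (mm n (card S))"])
  also have "\<dots> = (\<Sum>k\<le>n. real (n choose k) * F (mm n k))"
    using sum_Pow_card[of "{1..n}" "\<lambda>k. F (mm n k)"] by simp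
  finally show ?thesis .
qed

definition ww :: "nat \<Rightarrow> nat \<Rightarrow> real" where
  "ww n k = real (n choose k) * exp ((mm n k)^2 / (2 * real n))"

lemma cw_prob_eq:
  "cw_prob n (\<lambda>\<sigma>. magnetization n \<sigma> / real n powr (3/4) \<le> a)
   = (\<Sum>k\<le>n. if mm n k / real n powr (3/4) \<le> a then ww n k else 0) / (\<Sum>k\<le>n. ww n k)"
proof -
  have fin: "finite (cw_configs n)" unfolding cw_configs_def by (simp add: finite_PiE)
  have num: "(\<Sum>\<sigma>\<in>{\<sigma>\<in>cw_configs n. magnetization n \<sigma> / real n powr (3/4) \<le> a}. cw_weight n \<sigma>)
      = (\<Sum>\<sigma>\<in>cw_configs n. (\<lambda>M. if M / real n powr (3/4) \<le> a then exp (M^2 / (2 * real n)) else 0) (magnetization n \<sigma>))"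
    using fin by (simp add: sum.inter_filter[symmetric] cw_weight_def)
  have den: "(\<Sum>\<sigma>\<in>cw_configs n. cw_weight n \<sigma>)
      = (\<Sum>\<sigma>\<in>cw_configs n. (\<lambda>M. exp (M^2 / (2 * real n))) (magnetization n \<sigma>))"
    by (simp add: cw_weight_def)
  show ?thesis unfolding cw_prob_def num den
    unfolding sum_configs[of "\<lambda>M. if M / real n powr (3/4) \<le> a then exp (M^2 / (2 * real n)) else 0" n]
      sum_configs[of "\<lambda>M. exp (M^2 / (2 * real n))" n] ww_def
    by (intro arg_cong2[where f="(/)"] sum.cong) auto
qed


lemma lip_deriv:
  fixes \<phi> \<phi>' :: "real \<Rightarrow> real"
  assumes der: "\<And>x. x \<in> {a..b} \<Longrightarrow> (\<phi> has_real_derivative \<phi>' x) (at x)"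
    and bd: "\<And>x. x \<in> {a..b} \<Longrightarrow> \<bar>\<phi>' x\<bar> \<le> B"
    and xy: "x \<in> {a..b}" "y \<in> {a..b}"
  shows "\<bar>\<phi> y - \<phi> x\<bar> \<le> B * \<bar>y - x\<bar>"
proof -
  have main: "\<bar>\<phi> q - \<phi> p\<bar> \<le> B * (q - p)" if pq: "p < q" "p \<in> {a..b}" "q \<in> {a..b}" for p q
  proof -
    have "\<exists>z. p < z \<and> z < q \<and> \<phi> q - \<phi> p = (q - p) * \<phi>' z"
      by (rule MVT2[OF pq(1)]) (use der pq in auto)
    then obtain z where z: "p < z" "z < q" "\<phi> q - \<phi> p = (q - p) * \<phi>' z" by blast
    have "z \<in> {a..b}" using z pq by auto
    hence "\<bar>\<phi>' z\<bar> \<le> B" by (rule bd)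
    thus ?thesis using z pq by (simp add: abs_mult mult_right_mono mult.commute)
  qed
  consider "x < y" | "x = y" | "y < x" by linarith
  thus ?thesis
  proof cases
    case 1 thus ?thesis using main[OF 1 xy] by simp
  next
    case 2 thus ?thesis by simp
  next
    case 3 thus ?thesis using main[OF 3 xy(2,1)] by (simp add: abs_minus_commute)
  qed
qed

lemma ff_deriv: "(ff has_real_derivative (- (x^3 / 3) * ff x)) (at x)"
  unfolding ff_def by (rule derivative_eq_intros refl | simp)+

lemma ff_deriv_bd: "\<bar>- (x^3 / 3) * ff x\<bar> \<le> 3"
proof (cases "\<bar>x\<bar> \<le> 2")
  case True
  have "\<bar>x\<bar>^3 \<le> 2^3" using True by (intro power_mono) auto
  hence "\<bar>x^3\<bar> \<le> 8" by (simp add: power_abs)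
  moreover have "\<bar>ff x\<bar> \<le> 1" using ff_pos[of x] ff_le1[of x] by simp
  ultimately have "\<bar>x^3\<bar> * \<bar>ff x\<bar> \<le> 8 * 1" by (intro mult_mono) auto
  thus ?thesis by (simp add: abs_mult)
next
  case False
  hence x2: "\<bar>x\<bar> > 2" by simp
  have "x^4 / 12 \<le> exp (x^4/12)" using exp_ge_add_one_self[of "x^4/12"] by linarith
  hence "ff x * (x^4/12) \<le> ff x * exp (x^4 / 12)" using ff_pos[of x] by (intro mult_left_mono) auto
  also have "ff x * exp (x^4 / 12) = 1" unfolding ff_def by (simp add: exp_minus[symmetric] field_simps flip: exp_add)
  finally have a: "ff x * x^4 \<le> 12" by simp
  define y where "y = \<bar>x\<bar>"
  have y4: "y^4 = x^4" unfolding y_def by (simp add: power_abs[symmetric])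
  have y43: "y^4 = y^3 * y" by (simp add: eval_nat_numeral)
  define P where "P = ff x * y^3"
  have P0: "0 \<le> P" unfolding P_def y_def using ff_pos[of x] by simp
  have "P * y \<le> 12" using a unfolding P_def y4[symmetric] y43 by (simp add: mult.assoc)
  moreover have "P * 2 \<le> P * y" using P0 x2 y_def by (intro mult_left_mono) auto
  ultimately have "P \<le> 6" by linarith
  hence "ff x * \<bar>x\<bar>^3 \<le> 6" unfolding P_def y_def .
  thus ?thesis using ff_pos[of x] by (simp add: abs_mult power_abs mult.commute)
qed

lemma ff_lip: "\<bar>ff y - ff x\<bar> \<le> 3 * \<bar>y - x\<bar>"
  using lip_deriv[where \<phi>=ff and \<phi>'="\<lambda>x. - (x^3 / 3) * ff x" and a="min x y" and b="max x y" and B=3 and x=x and y=y]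
    ff_deriv ff_deriv_bd by auto

definition gfun :: "real \<Rightarrow> real" where "gfun x = 5/4 * x^2 + 4/45 * x^6"

lemma gfun_nonneg: "0 \<le> gfun x" unfolding gfun_def by (simp add: zero_le_even_power)

lemma gfun_mono: "\<bar>x\<bar> \<le> \<rho> \<Longrightarrow> gfun x \<le> gfun \<rho>"
proof -
  assume a: "\<bar>x\<bar> \<le> \<rho>"
  have "\<bar>x\<bar>^2 \<le> \<rho>^2" "\<bar>x\<bar>^6 \<le> \<rho>^6" using a power_mono[of "\<bar>x\<bar>" \<rho> 2] power_mono[of "\<bar>x\<bar>" \<rho> 6] by auto
  hence "x^2 \<le> \<rho>^2" "x^6 \<le> \<rho>^6" by (simp_all add: power_even_abs)
  thus ?thesis unfolding gfun_def by simp
qed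

lemma fg_deriv: "((\<lambda>x. ff x * gfun x) has_real_derivative
   (ff x * (5/2 * x + 8/15 * x^5) - (x^3 / 3) * ff x * gfun x)) (at x)"
proof -
  have g: "(gfun has_real_derivative (5/2 * x + 8/15 * x^5)) (at x)"
    unfolding gfun_def by (rule derivative_eq_intros refl | simp)+
  show ?thesis using DERIV_mult[OF ff_deriv g] by (simp add: algebra_simps)
qed

lemma fg_deriv_bd:
  assumes "\<bar>x\<bar> \<le> \<rho>" "1 \<le> \<rho>"
  shows "\<bar>ff x * (5/2 * x + 8/15 * x^5) - (x^3 / 3) * ff x * gfun x\<bar> \<le> 4 * \<rho>^9"
proof -
  have f: "0 \<le> ff x" "ff x \<le> 1" using ff_pos[of x] ff_le1[of x] by auto
  have p: "\<bar>x\<bar>^k \<le> \<rho>^9" if "k \<le> 9" for k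
  proof -
    have "\<bar>x\<bar>^k \<le> \<rho>^k" using assms by (intro power_mono) auto
    also have "\<rho>^k \<le> \<rho>^9" using assms that by (intro power_increasing) auto
    finally show ?thesis .
  qed
  have a1: "\<bar>5/2 * x + 8/15 * x^5\<bar> \<le> 5/2 * \<rho>^9 + 8/15 * \<rho>^9"
  proof -
    have "\<bar>5/2 * x + 8/15 * x^5\<bar> \<le> 5/2 * \<bar>x\<bar> + 8/15 * \<bar>x\<bar>^5"
      by (simp add: abs_mult power_abs) (rule abs_triangle_ineq[THEN order_trans]; simp add: abs_mult power_abs)
    also have "\<dots> \<le> 5/2 * \<rho>^9 + 8/15 * \<rho>^9" using p[of 1] p[of 5] by simp
    finally show ?thesis .
  qed
  have a2: "\<bar>x^3 / 3 * gfun x\<bar> \<le> 5/12 * \<rho>^9 + 4/135 * \<rho>^9"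
  proof -
    have e: "x^3 / 3 * gfun x = 5/12 * x^5 + 4/135 * x^9"
      unfolding gfun_def by (simp add: field_simps flip: power_add)
    have "\<bar>x^3 / 3 * gfun x\<bar> \<le> 5/12 * \<bar>x\<bar>^5 + 4/135 * \<bar>x\<bar>^9"
      unfolding e using abs_triangle_ineq[of "5/12 * x^5" "4/135 * x^9"] by (simp add: abs_mult power_abs)
    also have "\<dots> \<le> 5/12 * \<rho>^9 + 4/135 * \<rho>^9" using p[of 5] p[of 9] by simp
    finally show ?thesis .
  qed
  have "\<bar>ff x * (5/2 * x + 8/15 * x^5) - (x^3 / 3) * ff x * gfun x\<bar>
      = ff x * \<bar>(5/2 * x + 8/15 * x^5) - x^3 / 3 * gfun x\<bar>"
  proof -
    have "ff x * (5/2 * x + 8/15 * x^5) - (x^3 / 3) * ff x * gfun x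
        = ff x * ((5/2 * x + 8/15 * x^5) - x^3 / 3 * gfun x)" by (simp add: algebra_simps)
    thus ?thesis using f by (simp only: abs_mult)
  qed
  also have "\<dots> \<le> 1 * (\<bar>5/2 * x + 8/15 * x^5\<bar> + \<bar>x^3 / 3 * gfun x\<bar>)"
    using f by (intro mult_mono abs_triangle_ineq4) auto
  also have "\<dots> \<le> 4 * \<rho>^9" using a1 a2 by argo
  finally show ?thesis .
qed

lemma fg_lip:
  assumes "\<bar>x\<bar> \<le> \<rho>" "\<bar>y\<bar> \<le> \<rho>" "1 \<le> \<rho>"
  shows "\<bar>ff y * gfun y - ff x * gfun x\<bar> \<le> 4 * \<rho>^9 * \<bar>y - x\<bar>"
  by (rule lip_deriv[where a="-\<rho>" and b=\<rho>, OF fg_deriv]) (use assms fg_deriv_bd in \<open>auto simp: abs_le_iff\<close>)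

lemma cell_err:
  fixes \<phi> :: "real \<Rightarrow> real"
  assumes "0 \<le> h" "\<phi> integrable_on {a..a+h}" "\<And>y. y \<in> {a..a+h} \<Longrightarrow> \<bar>\<phi> y - \<phi> (a + h/2)\<bar> \<le> \<eta>"
  shows "\<bar>h * \<phi> (a + h/2) - integral {a..a+h} \<phi>\<bar> \<le> h * \<eta>"
proof -
  have b: "\<phi> (a + h/2) - \<eta> \<le> \<phi> y \<and> \<phi> y \<le> \<phi> (a + h/2) + \<eta>" if "y \<in> {a..a+h}" for y
    using assms(3)[OF that] by (simp add: abs_le_iff)
  have i1: "integral {a..a+h} \<phi> \<le> integral {a..a+h} (\<lambda>y. \<phi> (a + h/2) + \<eta>)"
    by (rule Henstock_Kurzweil_Integration.integral_le) (use assms(2) b in auto)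
  have i2: "integral {a..a+h} (\<lambda>y. \<phi> (a + h/2) - \<eta>) \<le> integral {a..a+h} \<phi>"
    by (rule Henstock_Kurzweil_Integration.integral_le) (use assms(2) b in auto)
  show ?thesis using i1 i2 assms(1) by (simp add: abs_le_iff algebra_simps)
qed

lemma Phi_lip: "a \<le> b \<Longrightarrow> 0 \<le> Phi b - Phi a \<and> Phi b - Phi a \<le> b - a"
proof -
  assume ab: "a \<le> b"
  have "integral {a..b} ff \<le> integral {a..b} (\<lambda>_. 1::real)"
    by (rule Henstock_Kurzweil_Integration.integral_le) (auto intro: ff_integrable_on ff_le1)
  moreover have "0 \<le> integral {a..b} ff"
    by (rule Henstock_Kurzweil_Integration.integral_nonneg) (auto intro: ff_integrable_on less_imp_le[OF ff_pos])
  ultimately show ?thesis using Phi_split[OF ab] ab by simp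
qed

lemma moment_bound:
  assumes "0 \<le> T"
  shows "integral {-T..T} (\<lambda>x. ff x * gfun x) \<le> 287/80 * integral {-T..T} ff"
proof -
  define H where "H x = 123/80 * (x * ff x) + 4/15 * (x^3 * ff x)" for x
  define H' where "H' x = 123/80 * (ff x + x * (-(x^3/3) * ff x)) + 4/15 * (3 * x^2 * ff x + x^3 * (-(x^3/3) * ff x))" for x
  have dH: "(H has_real_derivative H' x) (at x)" for x
  proof -
    have d1: "((\<lambda>x. x * ff x) has_real_derivative (1 * ff x + x * (-(x^3/3) * ff x))) (at x)"
      by (rule DERIV_cong[OF DERIV_mult[OF DERIV_ident ff_deriv]]) simp
    have d3: "((\<lambda>x. x^3 * ff x) has_real_derivative ((real 3 * x^(3 - Suc 0)) * ff x + x^3 * (-(x^3/3) * ff x))) (at x)"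
      by (rule DERIV_cong[OF DERIV_mult[OF DERIV_pow[of 3] ff_deriv]]) simp
    have "(H has_real_derivative (123/80 * (1 * ff x + x * (-(x^3/3) * ff x)) + 4/15 * ((real 3 * x^(3 - Suc 0)) * ff x + x^3 * (-(x^3/3) * ff x)))) (at x)"
      unfolding H_def by (intro DERIV_add DERIV_cmult d1 d3)
    thus ?thesis unfolding H'_def by simp
  qed
  have ftc: "(H' has_integral (H T - H (-T))) {-T..T}"
  proof (rule fundamental_theorem_of_calculus)
    show "-T \<le> T" using assms by simp
    fix x assume "x \<in> {-T..T}"
    show "(H has_vector_derivative H' x) (at x within {-T..T})"
      using dH[of x] unfolding has_real_derivative_iff_has_vector_derivative
      by (rule has_vector_derivative_at_within)
  qed
  have HT: "H T - H (-T) \<ge> 0" unfolding H_def using assms ff_pos[of T] by (simp add: ff_even)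
  have pw: "ff x * gfun x \<le> 287/80 * ff x - H' x" for x
  proof -
    have "287/80 * ff x - H' x - ff x * gfun x = 41/20 * ff x * (1 - x^2 / 2)^2"
      unfolding H'_def gfun_def by algebra
    moreover have "0 \<le> 41/20 * ff x * (1 - x^2 / 2)^2" using ff_pos[of x] by simp
    ultimately show ?thesis by linarith
  qed
  have int_fg: "(\<lambda>x. ff x * gfun x) integrable_on {-T..T}"
    unfolding gfun_def ff_def by (intro integrable_continuous_interval continuous_intros) auto
  have iH: "H' integrable_on {-T..T}" using ftc by (rule has_integral_integrable)
  have iF: "(\<lambda>x. 287/80 * ff x) integrable_on {-T..T}"
    using integrable_on_cmult_left[OF ff_integrable_on[of "-T" T], of "287/80"] by simp
  have "integral {-T..T} (\<lambda>x. ff x * gfun x) \<le> integral {-T..T} (\<lambda>x. 287/80 * ff x - H' x)"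
    by (rule Henstock_Kurzweil_Integration.integral_le[OF int_fg integrable_diff[OF iF iH] pw])
  also have "\<dots> = 287/80 * integral {-T..T} ff - (H T - H (-T))"
    using integral_diff[OF iF iH] integral_unique[OF ftc] by simp
  also have "\<dots> \<le> 287/80 * integral {-T..T} ff" using HT by simp
  finally show ?thesis .
qed


definition cc :: "nat \<Rightarrow> real" where "cc n = real n powr (3/4)"
definition hh :: "nat \<Rightarrow> real" where "hh n = 2 / cc n"
definition xk :: "nat \<Rightarrow> nat \<Rightarrow> real" where "xk n k = mm n k / cc n"
definition bt :: "nat \<Rightarrow> nat \<Rightarrow> real" where "bt n k = (mm n k - 1) / cc n"

lemma cc_pos: "n \<ge> 1 \<Longrightarrow> cc n > 0" unfolding cc_def by simp
lemma hh_pos: "n \<ge> 1 \<Longrightarrow> hh n > 0" unfolding hh_def using cc_pos by simp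

lemma bt_Suc: "n \<ge> 1 \<Longrightarrow> bt n (Suc k) = bt n k + hh n"
  unfolding bt_def hh_def mm_def using cc_pos[of n] by (simp add: field_simps)
lemma xk_bt: "n \<ge> 1 \<Longrightarrow> xk n k = bt n k + hh n / 2"
  unfolding bt_def hh_def xk_def mm_def using cc_pos[of n] by (simp add: field_simps)

lemma xk_mono: "n \<ge> 1 \<Longrightarrow> k \<le> l \<Longrightarrow> xk n k \<le> xk n l"
  unfolding xk_def mm_def using cc_pos[of n] by (simp add: divide_right_mono)

lemma cc4: "n \<ge> 1 \<Longrightarrow> (cc n)^4 = real n ^ 3"
proof -
  assume "n \<ge> 1"
  have "(cc n)^4 = real n powr (of_nat 4 * (3/4))" unfolding cc_def by (rule powr_power) (use \<open>n \<ge> 1\<close> in simp)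
  also have "\<dots> = real n powr 3" by simp
  also have "\<dots> = real n ^ 3" using \<open>n \<ge> 1\<close> by (simp add: powr_numeral)
  finally show ?thesis .
qed

lemma ww_eq: assumes "k \<le> n" "n \<ge> 1" shows "ww n k = exp (Lg n k) * ff (xk n k)"
proof -
  have b: "real (n choose k) > 0" using assms by simp
  have x4: "(xk n k)^4 = (mm n k)^4 / real n ^ 3" unfolding xk_def using cc4[OF assms(2)] by (simp add: power_divide)
  have "exp (Lg n k) * ff (xk n k) = exp (Lg n k + (- ((xk n k)^4) / 12))"
    unfolding ff_def by (simp only: exp_add)
  also have "Lg n k + (- ((xk n k)^4) / 12) = ln (real (n choose k)) + (mm n k)^2 / (2 * real n) + ((mm n k)^4 / (12 * real n ^ 3) + (- ((xk n k)^4) / 12))"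
    unfolding Lg_def by simp
  also have "(mm n k)^4 / (12 * real n ^ 3) + (- ((xk n k)^4) / 12) = 0" unfolding x4 by simp
  also have "exp (ln (real (n choose k)) + (mm n k)^2 / (2 * real n) + 0) = ww n k"
    unfolding ww_def using b by (simp add: exp_add)
  finally show ?thesis by simp
qed

lemma down_closed_eq:
  fixes K :: "nat set"
  assumes "finite K" "\<And>k l. k \<in> K \<Longrightarrow> l \<le> k \<Longrightarrow> l \<in> K"
  shows "K = {..<card K}"
proof (cases "K = {}")
  case True thus ?thesis by simp
next
  case False
  define M where "M = Max K"
  have MK: "M \<in> K" using False assms M_def by simp
  have "K = {..M}"
  proof
    show "K \<subseteq> {..M}" using assms M_def by auto
    show "{..M} \<subseteq> K" using MK assms(2) by auto
  qed
  thus ?thesis by (simp add: lessThan_Suc_atMost[symmetric])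
qed

definition jj :: "nat \<Rightarrow> real \<Rightarrow> nat" where "jj n a = card {k \<in> {..n}. xk n k \<le> a}"

lemma jj_set: "n \<ge> 1 \<Longrightarrow> {k \<in> {..n}. xk n k \<le> a} = {..<jj n a}"
  unfolding jj_def
  by (rule down_closed_eq) (auto intro: order_trans[OF xk_mono])

lemma jj_le: "n \<ge> 1 \<Longrightarrow> jj n a \<le> n + 1"
proof -
  assume n: "n \<ge> 1"
  have "jj n a \<le> card {..n}" unfolding jj_def by (rule card_mono) auto
  thus ?thesis by simp
qed

lemma jj_below: "n \<ge> 1 \<Longrightarrow> k < jj n a \<Longrightarrow> xk n k \<le> a"
  using jj_set[of n a] by auto
lemma jj_above: "n \<ge> 1 \<Longrightarrow> jj n a \<le> k \<Longrightarrow> k \<le> n \<Longrightarrow> a < xk n k"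
  using jj_set[of n a] by (metis (mono_tags, lifting) atMost_iff lessThan_iff linorder_not_le mem_Collect_eq)

lemma sum_if_jj:
  assumes "n \<ge> 1"
  shows "(\<Sum>k\<le>n. if xk n k \<le> a then F k else 0) = (\<Sum>k<jj n a. F k)"
proof -
  have "(\<Sum>k\<le>n. if xk n k \<le> a then F k else 0) = (\<Sum>k\<in>{k \<in> {..n}. xk n k \<le> a}. F k)"
    by (rule sum.inter_filter[symmetric]) simp
  thus ?thesis using jj_set[OF assms] by simp
qed

definition ak :: "nat \<Rightarrow> nat \<Rightarrow> real" where "ak n k = ff (xk n k) * exp (Lg n k - Lg n (k0 n))"

lemma P_eq:
  assumes "n \<ge> 1"
  shows "cw_prob n (\<lambda>\<sigma>. magnetization n \<sigma> / real n powr (3/4) \<le> a)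
       = (\<Sum>k<jj n a. ak n k) / (\<Sum>k\<le>n. ak n k)"
proof -
  have w: "ww n k = exp (Lg n (k0 n)) * ak n k" if "k \<le> n" for k
    unfolding ak_def ww_eq[OF that assms] by (simp add: exp_diff)
  have "cw_prob n (\<lambda>\<sigma>. magnetization n \<sigma> / real n powr (3/4) \<le> a)
     = (\<Sum>k\<le>n. if xk n k \<le> a then ww n k else 0) / (\<Sum>k\<le>n. ww n k)"
    unfolding cw_prob_eq xk_def cc_def ..
  also have "(\<Sum>k\<le>n. if xk n k \<le> a then ww n k else 0) = (\<Sum>k<jj n a. ww n k)" by (rule sum_if_jj[OF assms])
  also have "(\<Sum>k<jj n a. ww n k) = exp (Lg n (k0 n)) * (\<Sum>k<jj n a. ak n k)"
    unfolding sum_distrib_left using jj_le[OF assms, of a] by (intro sum.cong) (auto intro!: w)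
  also have "(\<Sum>k\<le>n. ww n k) = exp (Lg n (k0 n)) * (\<Sum>k\<le>n. ak n k)"
    unfolding sum_distrib_left by (intro sum.cong) (auto intro!: w)
  finally show ?thesis by simp
qed

lemma tv_bound:
  fixes A B :: "nat \<Rightarrow> real"
  assumes fin: "finite I" and JI: "J \<subseteq> I" and A0: "\<And>k. k \<in> I \<Longrightarrow> 0 \<le> A k" and B0: "\<And>k. k \<in> I \<Longrightarrow> 0 \<le> B k"
    and DB: "(\<Sum>k\<in>I. \<bar>A k - B k\<bar>) < (\<Sum>k\<in>I. B k)"
  shows "\<bar>(\<Sum>k\<in>J. A k) / (\<Sum>k\<in>I. A k) - (\<Sum>k\<in>J. B k) / (\<Sum>k\<in>I. B k)\<bar>
     \<le> 2 * (\<Sum>k\<in>I. \<bar>A k - B k\<bar>) / ((\<Sum>k\<in>I. B k) - (\<Sum>k\<in>I. \<bar>A k - B k\<bar>))"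
proof -
  define D where "D = (\<Sum>k\<in>I. \<bar>A k - B k\<bar>)"
  define SA where "SA = (\<Sum>k\<in>I. A k)"
  define SB where "SB = (\<Sum>k\<in>I. B k)"
  define \<alpha> where "\<alpha> = (\<Sum>k\<in>J. A k)"
  define \<beta> where "\<beta> = (\<Sum>k\<in>J. B k)"
  have finJ: "finite J" using finite_subset[OF JI fin] .
  have D0: "0 \<le> D" unfolding D_def by (simp add: sum_nonneg)
  have "\<bar>SA - SB\<bar> \<le> D" unfolding SA_def SB_def D_def sum_subtractf[symmetric] by (rule sum_abs)
  hence SA: "SA \<ge> SB - D" by simp
  have SBD: "SB - D > 0" using DB unfolding D_def SB_def by simp
  hence SApos: "SA > 0" using SA by simp
  have SBpos: "SB > 0" using SBD D0 by simp
  have "\<bar>\<alpha> - \<beta>\<bar> \<le> (\<Sum>k\<in>J. \<bar>A k - B k\<bar>)" unfolding \<alpha>_def \<beta>_def sum_subtractf[symmetric] by (rule sum_abs)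
  also have "\<dots> \<le> D" unfolding D_def by (rule sum_mono2[OF fin JI]) auto
  finally have ab: "\<bar>\<alpha> - \<beta>\<bar> \<le> D" .
  have b0: "0 \<le> \<beta>" unfolding \<beta>_def using B0 JI by (intro sum_nonneg) auto
  have bB: "\<beta> \<le> SB" unfolding \<beta>_def SB_def by (rule sum_mono2[OF fin JI]) (use B0 in auto)
  have eq: "\<alpha> / SA - \<beta> / SB = (\<alpha> - \<beta>) / SA + (\<beta> / SB) * ((SB - SA) / SA)"
    using SApos SBpos by (simp add: field_simps)
  have t1: "\<bar>(\<alpha> - \<beta>) / SA\<bar> \<le> D / SA"
  proof -
    have "\<bar>(\<alpha> - \<beta>) / SA\<bar> = \<bar>\<alpha> - \<beta>\<bar> / SA" using SApos by (simp add: abs_divide)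
    also have "\<dots> \<le> D / SA" using ab SApos by (intro divide_right_mono) auto
    finally show ?thesis .
  qed
  have q1: "\<bar>\<beta> / SB\<bar> \<le> 1"
  proof -
    have "\<bar>\<beta> / SB\<bar> = \<beta> / SB" using SBpos b0 by (simp add: abs_divide)
    also have "\<dots> \<le> 1" using bB SBpos by (simp add: divide_le_eq_1_pos)
    finally show ?thesis .
  qed
  have q2: "\<bar>(SB - SA) / SA\<bar> \<le> D / SA"
  proof -
    have "\<bar>(SB - SA) / SA\<bar> = \<bar>SA - SB\<bar> / SA" using SApos by (simp add: abs_divide abs_minus_commute)
    also have "\<dots> \<le> D / SA" using \<open>\<bar>SA - SB\<bar> \<le> D\<close> SApos by (intro divide_right_mono) auto
    finally show ?thesis .
  qed
  have "\<bar>(\<beta> / SB) * ((SB - SA) / SA)\<bar> = \<bar>\<beta> / SB\<bar> * \<bar>(SB - SA) / SA\<bar>" by (rule abs_mult)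
  also have "\<dots> \<le> 1 * (D / SA)" by (rule mult_mono[OF q1 q2]) auto
  finally have t2: "\<bar>(\<beta> / SB) * ((SB - SA) / SA)\<bar> \<le> D / SA" by simp
  have "\<bar>\<alpha> / SA - \<beta> / SB\<bar> \<le> \<bar>(\<alpha> - \<beta>) / SA\<bar> + \<bar>(\<beta> / SB) * ((SB - SA) / SA)\<bar>"
    unfolding eq by (rule abs_triangle_ineq)
  also have "\<dots> \<le> 2 * D / SA" using t1 t2 by simp
  finally have "\<bar>\<alpha> / SA - \<beta> / SB\<bar> \<le> 2 * D / SA" .
  also have "\<dots> \<le> 2 * D / (SB - D)" using SA SBD D0 by (intro divide_left_mono) auto
  finally show ?thesis unfolding D_def SA_def SB_def \<alpha>_def \<beta>_def .
qed

lemma ratio_bound: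
  fixes N S M Z :: real
  assumes "0 < S" "0 < Z" "0 \<le> M" "M \<le> Z"
  shows "\<bar>N / S - M / Z\<bar> \<le> (\<bar>N - M\<bar> + \<bar>S - Z\<bar>) / S"
proof -
  have eq: "N / S - M / Z = (N - M) / S + (M / Z) * ((Z - S) / S)" using assms by (simp add: field_simps)
  have q1: "\<bar>M / Z\<bar> \<le> 1"
  proof -
    have "\<bar>M / Z\<bar> = M / Z" using assms by (simp add: abs_divide)
    also have "\<dots> \<le> 1" using assms by (simp add: divide_le_eq_1_pos)
    finally show ?thesis .
  qed
  have q2: "\<bar>(Z - S) / S\<bar> \<le> \<bar>S - Z\<bar> / S" using assms by (simp add: abs_divide abs_minus_commute)
  have "\<bar>(M / Z) * ((Z - S) / S)\<bar> = \<bar>M / Z\<bar> * \<bar>(Z - S) / S\<bar>" by (rule abs_mult)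
  also have "\<dots> \<le> 1 * (\<bar>S - Z\<bar> / S)" by (rule mult_mono[OF q1 q2]) (use assms in auto)
  finally have t2: "\<bar>(M / Z) * ((Z - S) / S)\<bar> \<le> \<bar>S - Z\<bar> / S" by simp
  have t1: "\<bar>(N - M) / S\<bar> = \<bar>N - M\<bar> / S" using assms by (simp add: abs_divide)
  have "\<bar>N / S - M / Z\<bar> \<le> \<bar>(N - M) / S\<bar> + \<bar>(M / Z) * ((Z - S) / S)\<bar>"
    unfolding eq by (rule abs_triangle_ineq)
  hence "\<bar>N / S - M / Z\<bar> \<le> \<bar>N - M\<bar> / S + \<bar>S - Z\<bar> / S" using t1 t2 by linarith
  thus ?thesis by (simp add: add_divide_distrib)
qed

lemma card_bulk:
  fixes L :: real
  assumes "0 \<le> L"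
  shows "real (card {k \<in> {..n}. \<bar>mm n k\<bar> \<le> L}) \<le> 2 * L + 1"
proof -
  define f where "f k = 2 * int k - int n" for k
  have inj: "inj_on f {k \<in> {..n}. \<bar>mm n k\<bar> \<le> L}" unfolding f_def inj_on_def by auto
  have im: "f ` {k \<in> {..n}. \<bar>mm n k\<bar> \<le> L} \<subseteq> {-\<lfloor>L\<rfloor>..\<lfloor>L\<rfloor>}"
  proof
    fix z assume "z \<in> f ` {k \<in> {..n}. \<bar>mm n k\<bar> \<le> L}"
    then obtain k where k: "\<bar>mm n k\<bar> \<le> L" "z = f k" by auto
    have "mm n k = real_of_int z" unfolding k(2) f_def mm_def by simp
    hence "\<bar>real_of_int z\<bar> \<le> L" using k by simp
    hence "real_of_int z \<le> L" "real_of_int (-z) \<le> L" by (auto simp: abs_le_iff)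
    hence "z \<le> \<lfloor>L\<rfloor>" "-z \<le> \<lfloor>L\<rfloor>" by (simp_all only: le_floor_iff)
    thus "z \<in> {-\<lfloor>L\<rfloor>..\<lfloor>L\<rfloor>}" by simp
  qed
  have "card {k \<in> {..n}. \<bar>mm n k\<bar> \<le> L} \<le> card {-\<lfloor>L\<rfloor>..\<lfloor>L\<rfloor>}"
    by (rule card_inj_on_le[OF inj im]) simp
  also have "\<dots> = nat (2 * \<lfloor>L\<rfloor> + 1)" by simp
  finally have "real (card {k \<in> {..n}. \<bar>mm n k\<bar> \<le> L}) \<le> real (nat (2 * \<lfloor>L\<rfloor> + 1))" by linarith
  also have "\<dots> = 2 * real_of_int \<lfloor>L\<rfloor> + 1" using assms by simp
  also have "\<dots> \<le> 2 * L + 1" by linarith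
  finally show ?thesis .
qed


lemma ff_tail: "r \<le> \<bar>y\<bar> \<Longrightarrow> 0 \<le> r \<Longrightarrow> ff y \<le> exp (- (r^4) / 12)"
proof -
  assume a: "r \<le> \<bar>y\<bar>" "0 \<le> r"
  have "r^4 \<le> \<bar>y\<bar>^4" using a by (intro power_mono) auto
  hence "r^4 \<le> y^4" by (simp add: power_even_abs)
  thus ?thesis unfolding ff_def by simp
qed

lemma cell_facts:
  assumes "n \<ge> 1" "k \<le> n" "y \<in> {bt n k..bt n k + hh n}"
  shows "\<bar>y - xk n k\<bar> \<le> hh n / 2" "\<bar>y\<bar> \<le> (real n + 1) / cc n"
proof -
  have yy: "bt n k \<le> y" "y \<le> bt n k + hh n" using assms(3) by auto
  show "\<bar>y - xk n k\<bar> \<le> hh n / 2" unfolding xk_bt[OF assms(1)] abs_le_iff using yy by linarith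
  have c: "cc n > 0" using cc_pos assms by simp
  have "bt n k + (real n + 1) / cc n = 2 * real k / cc n" unfolding bt_def mm_def using c by (simp add: field_simps)
  moreover have "0 \<le> 2 * real k / cc n" using c by simp
  moreover have "bt n k + hh n \<le> (real n + 1) / cc n"
    using assms unfolding bt_def mm_def hh_def using c by (simp add: field_simps)
  ultimately show "\<bar>y\<bar> \<le> (real n + 1) / cc n" unfolding abs_le_iff using yy by linarith
qed

lemma sum_if_bound:
  fixes X Y :: real
  assumes "0 \<le> X" "0 \<le> Y"
  shows "(\<Sum>k\<le>n. if P k then X else Y) \<le> X * card {k \<in> {..n}. P k} + Y * (real n + 1)"
proof -
  have "(\<Sum>k\<le>n. if P k then X else Y) \<le> (\<Sum>k\<le>n. (if P k then X else 0) + Y)"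
    by (rule sum_mono) (use assms in auto)
  also have "\<dots> = (\<Sum>k\<le>n. if P k then X else 0) + Y * (real n + 1)" by (simp add: sum.distrib)
  also have "(\<Sum>k\<le>n. if P k then X else 0) = X * card {k \<in> {..n}. P k}"
    by (simp add: sum.inter_filter[symmetric])
  finally show ?thesis .
qed

lemma riem_ff:
  assumes n: "n \<ge> 1" and j: "j \<le> n + 1"
    and eta: "\<And>k y. k \<le> n \<Longrightarrow> y \<in> {bt n k..bt n k + hh n} \<Longrightarrow> \<bar>ff y - ff (xk n k)\<bar> \<le> \<eta> k"
    and eta0: "\<And>k. 0 \<le> \<eta> k"
  shows "\<bar>(\<Sum>k<j. hh n * ff (xk n k)) - (Phi (bt n j) - Phi (bt n 0))\<bar> \<le> (\<Sum>k\<le>n. hh n * \<eta> k)"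
proof -
  have h0: "0 \<le> hh n" using hh_pos n by (simp add: less_imp_le)
  have tel: "Phi (bt n j) - Phi (bt n 0) = (\<Sum>k<j. Phi (bt n (Suc k)) - Phi (bt n k))"
    by (rule sum_lessThan_telescope[symmetric])
  have cell: "Phi (bt n (Suc k)) - Phi (bt n k) = integral {bt n k..bt n k + hh n} ff" for k
    using Phi_split[of "bt n k" "bt n k + hh n"] bt_Suc[OF n] h0 by simp
  have "\<bar>(\<Sum>k<j. hh n * ff (xk n k)) - (Phi (bt n j) - Phi (bt n 0))\<bar>
      = \<bar>\<Sum>k<j. hh n * ff (bt n k + hh n / 2) - integral {bt n k..bt n k + hh n} ff\<bar>"
    unfolding tel cell sum_subtractf xk_bt[OF n] ..
  also have "\<dots> \<le> (\<Sum>k<j. \<bar>hh n * ff (bt n k + hh n / 2) - integral {bt n k..bt n k + hh n} ff\<bar>)"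
    by (rule sum_abs)
  also have "\<dots> \<le> (\<Sum>k<j. hh n * \<eta> k)"
  proof (rule sum_mono)
    fix k assume "k \<in> {..<j}"
    hence kn: "k \<le> n" using j by auto
    show "\<bar>hh n * ff (bt n k + hh n / 2) - integral {bt n k..bt n k + hh n} ff\<bar> \<le> hh n * \<eta> k"
      by (rule cell_err[OF h0 ff_integrable_on]) (use eta[OF kn] xk_bt[OF n, of k] in auto)
  qed
  also have "\<dots> \<le> (\<Sum>k\<le>n. hh n * \<eta> k)"
    by (rule sum_mono2) (use j h0 eta0 in auto)
  finally show ?thesis .
qed

lemma fg_cont: "continuous_on S (\<lambda>x. ff x * gfun x)"
  unfolding ff_def gfun_def by (intro continuous_intros) auto

lemma int_additive:
  assumes n: "n \<ge> 1"
  shows "integral {bt n 0..bt n j} (\<lambda>x. ff x * gfun x) = (\<Sum>k<j. integral {bt n k..bt n (Suc k)} (\<lambda>x. ff x * gfun x))"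
proof (induction j)
  case 0 thus ?case by simp
next
  case (Suc j)
  have h0: "0 \<le> hh n" using hh_pos n by (simp add: less_imp_le)
  have m: "bt n 0 \<le> bt n j" unfolding bt_def mm_def using cc_pos[OF n] by (simp add: divide_right_mono)
  have "integral {bt n 0..bt n j} (\<lambda>x. ff x * gfun x) + integral {bt n j..bt n (Suc j)} (\<lambda>x. ff x * gfun x)
      = integral {bt n 0..bt n (Suc j)} (\<lambda>x. ff x * gfun x)"
    by (rule Henstock_Kurzweil_Integration.integral_combine) (use m bt_Suc[OF n] h0 in \<open>auto intro: integrable_continuous_interval fg_cont\<close>)
  thus ?case using Suc by simp
qed

lemma riem_fg:
  assumes n: "n \<ge> 1"
    and eta: "\<And>k y. k \<le> n \<Longrightarrow> y \<in> {bt n k..bt n k + hh n} \<Longrightarrow> \<bar>ff y * gfun y - ff (xk n k) * gfun (xk n k)\<bar> \<le> \<eta> k"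
    and eta0: "\<And>k. 0 \<le> \<eta> k"
  shows "(\<Sum>k\<le>n. hh n * (ff (xk n k) * gfun (xk n k)))
       \<le> integral {bt n 0..bt n (n+1)} (\<lambda>x. ff x * gfun x) + (\<Sum>k\<le>n. hh n * \<eta> k)"
proof -
  have h0: "0 \<le> hh n" using hh_pos n by (simp add: less_imp_le)
  have "(\<Sum>k\<le>n. hh n * (ff (xk n k) * gfun (xk n k))) - integral {bt n 0..bt n (n+1)} (\<lambda>x. ff x * gfun x)
      = (\<Sum>k<n+1. hh n * (ff (bt n k + hh n / 2) * gfun (bt n k + hh n / 2)) - integral {bt n k..bt n k + hh n} (\<lambda>x. ff x * gfun x))"
    unfolding int_additive[OF n] sum_subtractf xk_bt[OF n] bt_Suc[OF n] by (simp add: lessThan_Suc_atMost)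
  also have "\<dots> \<le> (\<Sum>k<n+1. \<bar>hh n * (ff (bt n k + hh n / 2) * gfun (bt n k + hh n / 2)) - integral {bt n k..bt n k + hh n} (\<lambda>x. ff x * gfun x)\<bar>)"
    by (rule sum_mono) simp
  also have "\<dots> \<le> (\<Sum>k<n+1. hh n * \<eta> k)"
  proof (rule sum_mono)
    fix k assume "k \<in> {..<n+1}"
    hence kn: "k \<le> n" by auto
    show "\<bar>hh n * (ff (bt n k + hh n / 2) * gfun (bt n k + hh n / 2)) - integral {bt n k..bt n k + hh n} (\<lambda>x. ff x * gfun x)\<bar> \<le> hh n * \<eta> k"
      by (rule cell_err[OF h0 integrable_continuous_interval[OF fg_cont]]) (use eta[OF kn] xk_bt[OF n, of k] in auto)
  qed
  also have "\<dots> = (\<Sum>k\<le>n. hh n * \<eta> k)" by (simp add: lessThan_Suc_atMost)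
  finally show ?thesis by simp
qed


definition errf :: "nat \<Rightarrow> real \<Rightarrow> real" where
  "errf n R = hh n * (2 * hh n * (2 * R * cc n + 1) + exp (- ((R/2)^4) / 12) * (real n + 1))"
definition errg :: "nat \<Rightarrow> real \<Rightarrow> real" where
  "errg n R = hh n * (2 * (R+1)^9 * hh n * (2 * R * cc n + 1) + exp (- ((R/2)^4) / 12) * gfun ((real n + 1) / cc n) * (real n + 1))"
definition tailb :: "nat \<Rightarrow> real" where "tailb n = GG * exp (- real n / 24)"
definition ss :: "nat \<Rightarrow> real" where "ss n = real n powr (-1/2)"

lemma bulk_set: "n \<ge> 1 \<Longrightarrow> {k \<in> {..n}. \<bar>xk n k\<bar> \<le> R} = {k \<in> {..n}. \<bar>mm n k\<bar> \<le> R * cc n}"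
  unfolding xk_def using cc_pos[of n] by (auto simp: abs_divide pos_divide_le_eq)

lemma card_bulk2:
  assumes "n \<ge> 1" "0 \<le> R"
  shows "real (card {k \<in> {..n}. \<bar>xk n k\<bar> \<le> R}) \<le> 2 * R * cc n + 1"
  unfolding bulk_set[OF assms(1)] using card_bulk[of "R * cc n" n] assms cc_pos[of n] by simp

lemma errf_ok:
  assumes n: "n \<ge> 1" and R: "1 \<le> R" "hh n \<le> 1" and j: "j \<le> n + 1"
  shows "\<bar>(\<Sum>k<j. hh n * ff (xk n k)) - (Phi (bt n j) - Phi (bt n 0))\<bar> \<le> errf n R"
proof -
  define E2 where "E2 = exp (- ((R/2)^4) / 12)"
  define \<eta> where "\<eta> k = (if \<bar>xk n k\<bar> \<le> R then 2 * hh n else E2)" for k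
  have h0: "0 < hh n" using hh_pos n by simp
  have "\<bar>(\<Sum>k<j. hh n * ff (xk n k)) - (Phi (bt n j) - Phi (bt n 0))\<bar> \<le> (\<Sum>k\<le>n. hh n * \<eta> k)"
  proof (rule riem_ff[OF n j])
    fix k y assume k: "k \<le> n" and y: "y \<in> {bt n k..bt n k + hh n}"
    have d: "\<bar>y - xk n k\<bar> \<le> hh n / 2" by (rule cell_facts[OF n k y])
    show "\<bar>ff y - ff (xk n k)\<bar> \<le> \<eta> k"
    proof (cases "\<bar>xk n k\<bar> \<le> R")
      case True
      have "\<bar>ff y - ff (xk n k)\<bar> \<le> 3 * \<bar>y - xk n k\<bar>" by (rule ff_lip)
      also have "\<dots> \<le> 3 * (hh n / 2)" using d by simp
      finally show ?thesis using True h0 unfolding \<eta>_def by simp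
    next
      case False
      have t: "\<bar>xk n k\<bar> - \<bar>y\<bar> \<le> \<bar>y - xk n k\<bar>" using abs_triangle_ineq2[of "xk n k" y] by (simp add: abs_minus_commute)
      have r1: "R / 2 \<le> \<bar>y\<bar>" using False d R t by linarith
      have r2: "R / 2 \<le> \<bar>xk n k\<bar>" using False R by simp
      have "ff y \<le> E2" unfolding E2_def by (rule ff_tail[OF r1]) (use R in simp)
      moreover have "ff (xk n k) \<le> E2" unfolding E2_def by (rule ff_tail[OF r2]) (use R in simp)
      ultimately have "\<bar>ff y - ff (xk n k)\<bar> \<le> E2" using ff_pos[of y] ff_pos[of "xk n k"] by (simp add: abs_le_iff)
      thus ?thesis using False unfolding \<eta>_def by simp
    qed
  next
    fix k show "0 \<le> \<eta> k" unfolding \<eta>_def E2_def using h0 by simp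
  qed
  also have "(\<Sum>k\<le>n. hh n * \<eta> k) = hh n * (\<Sum>k\<le>n. \<eta> k)" by (simp add: sum_distrib_left)
  also have "(\<Sum>k\<le>n. \<eta> k) \<le> 2 * hh n * real (card {k \<in> {..n}. \<bar>xk n k\<bar> \<le> R}) + E2 * (real n + 1)"
    unfolding \<eta>_def by (rule sum_if_bound) (use h0 E2_def in auto)
  also have "\<dots> \<le> 2 * hh n * (2 * R * cc n + 1) + E2 * (real n + 1)"
    using card_bulk2[OF n, of R] R h0 by (intro add_right_mono mult_left_mono) auto
  finally show ?thesis unfolding errf_def E2_def using h0 by (simp add: mult_left_mono)
qed


lemma bt0: "n \<ge> 1 \<Longrightarrow> bt n 0 = - ((real n + 1) / cc n)"
  unfolding bt_def mm_def by (simp add: minus_divide_left)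
lemma btn: "n \<ge> 1 \<Longrightarrow> bt n (n + 1) = (real n + 1) / cc n"
  unfolding bt_def mm_def by simp

lemma errg_ok:
  assumes n: "n \<ge> 1" and R: "1 \<le> R" "hh n \<le> 1"
  shows "(\<Sum>k\<le>n. hh n * (ff (xk n k) * gfun (xk n k))) \<le> 287/80 * ZZ + errg n R"
proof -
  define E2 where "E2 = exp (- ((R/2)^4) / 12)"
  define T where "T = (real n + 1) / cc n"
  define \<eta> where "\<eta> k = (if \<bar>xk n k\<bar> \<le> R then 2 * (R+1)^9 * hh n else E2 * gfun T)" for k
  have h0: "0 < hh n" using hh_pos n by simp
  have T0: "0 \<le> T" unfolding T_def using cc_pos[OF n] by simp
  have "(\<Sum>k\<le>n. hh n * (ff (xk n k) * gfun (xk n k))) \<le> integral {bt n 0..bt n (n+1)} (\<lambda>x. ff x * gfun x) + (\<Sum>k\<le>n. hh n * \<eta> k)"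
  proof (rule riem_fg[OF n])
    fix k y assume k: "k \<le> n" and y: "y \<in> {bt n k..bt n k + hh n}"
    have d: "\<bar>y - xk n k\<bar> \<le> hh n / 2" by (rule cell_facts[OF n k y])
    have yT: "\<bar>y\<bar> \<le> T" unfolding T_def by (rule cell_facts[OF n k y])
    have xin: "xk n k \<in> {bt n k..bt n k + hh n}" using xk_bt[OF n, of k] h0 by simp
    have xT: "\<bar>xk n k\<bar> \<le> T" unfolding T_def by (rule cell_facts[OF n k xin])
    show "\<bar>ff y * gfun y - ff (xk n k) * gfun (xk n k)\<bar> \<le> \<eta> k"
    proof (cases "\<bar>xk n k\<bar> \<le> R")
      case True
      have t: "\<bar>y\<bar> - \<bar>xk n k\<bar> \<le> \<bar>y - xk n k\<bar>" by (rule abs_triangle_ineq2)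
      have "\<bar>ff y * gfun y - ff (xk n k) * gfun (xk n k)\<bar> \<le> 4 * (R+1)^9 * \<bar>y - xk n k\<bar>"
        by (rule fg_lip) (use True t d R in auto)
      also have "\<dots> \<le> 4 * (R+1)^9 * (hh n / 2)" using d R by (intro mult_left_mono) auto
      also have "\<dots> = 2 * (R+1)^9 * hh n" by simp
      finally show ?thesis using True unfolding \<eta>_def by simp
    next
      case False
      have t: "\<bar>xk n k\<bar> - \<bar>y\<bar> \<le> \<bar>y - xk n k\<bar>" using abs_triangle_ineq2[of "xk n k" y] by (simp add: abs_minus_commute)
      have r1: "R / 2 \<le> \<bar>y\<bar>" using False d R t by linarith
      have r2: "R / 2 \<le> \<bar>xk n k\<bar>" using False R by simp
      have "ff y * gfun y \<le> E2 * gfun T" unfolding E2_def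
        by (intro mult_mono ff_tail[OF r1] gfun_mono[OF yT]) (use R gfun_nonneg in auto)
      moreover have "ff (xk n k) * gfun (xk n k) \<le> E2 * gfun T" unfolding E2_def
        by (intro mult_mono ff_tail[OF r2] gfun_mono[OF xT]) (use R gfun_nonneg in auto)
      moreover have "0 \<le> ff y * gfun y" "0 \<le> ff (xk n k) * gfun (xk n k)"
        using ff_pos gfun_nonneg by (auto intro: mult_nonneg_nonneg less_imp_le)
      ultimately have "\<bar>ff y * gfun y - ff (xk n k) * gfun (xk n k)\<bar> \<le> E2 * gfun T" by (simp add: abs_le_iff)
      thus ?thesis using False unfolding \<eta>_def by simp
    qed
  next
    fix k show "0 \<le> \<eta> k" unfolding \<eta>_def E2_def using h0 R gfun_nonneg[of T] by simp
  qed
  also have "integral {bt n 0..bt n (n+1)} (\<lambda>x. ff x * gfun x) \<le> 287/80 * ZZ"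
  proof -
    have "integral {bt n 0..bt n (n+1)} (\<lambda>x. ff x * gfun x) \<le> 287/80 * integral {-T..T} ff"
      unfolding bt0[OF n] btn[OF n] T_def[symmetric] by (rule moment_bound[OF T0])
    also have "\<dots> \<le> 287/80 * ZZ" using integral_ff_le_ZZ[of "-T" T] T0 by simp
    finally show ?thesis .
  qed
  also have "(\<Sum>k\<le>n. hh n * \<eta> k) = hh n * (\<Sum>k\<le>n. \<eta> k)" by (simp add: sum_distrib_left)
  also have "(\<Sum>k\<le>n. \<eta> k) \<le> 2 * (R+1)^9 * hh n * real (card {k \<in> {..n}. \<bar>xk n k\<bar> \<le> R}) + E2 * gfun T * (real n + 1)"
    unfolding \<eta>_def by (rule sum_if_bound) (use h0 E2_def R gfun_nonneg[of T] in auto)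
  also have "\<dots> \<le> 2 * (R+1)^9 * hh n * (2 * R * cc n + 1) + E2 * gfun T * (real n + 1)"
    using card_bulk2[OF n, of R] R h0 by (intro add_right_mono mult_left_mono) auto
  finally show ?thesis unfolding errg_def E2_def T_def using h0 by (simp add: mult_left_mono)
qed

lemma T4: assumes "n \<ge> 1" shows "real n \<le> ((real n + 1) / cc n)^4"
proof -
  have "((real n + 1) / cc n)^4 = (real n + 1)^4 / real n ^ 3" using cc4[OF assms] by (simp add: power_divide)
  moreover have "real n * real n ^ 3 \<le> (real n + 1)^4"
  proof -
    have "real n * real n ^ 3 = real n ^ 4" by (simp add: power_eq_if)
    also have "\<dots> \<le> (real n + 1)^4" by (intro power_mono) auto
    finally show ?thesis .
  qed
  ultimately show ?thesis using assms by (simp add: pos_le_divide_eq)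
qed

lemma tails:
  assumes n: "n \<ge> 1"
  shows "Phi (bt n 0) \<le> tailb n" "ZZ - Phi (bt n (n+1)) \<le> tailb n"
proof -
  define T where "T = (real n + 1) / cc n"
  have T0: "0 \<le> T" unfolding T_def using cc_pos[OF n] by simp
  have e: "GG * exp (- (T^4) / 24) \<le> tailb n"
    unfolding tailb_def using T4[OF n] GG_nonneg unfolding T_def[symmetric] by (intro mult_left_mono) auto
  show "Phi (bt n 0) \<le> tailb n" using Phi_tail_left[OF T0] e unfolding bt0[OF n] T_def[symmetric] by (simp add: mult.commute)
  show "ZZ - Phi (bt n (n+1)) \<le> tailb n" using Phi_tail_right[OF T0] e unfolding btn[OF n] T_def[symmetric] by (simp add: mult.commute)
qed


lemma ss_cc2: assumes "n \<ge> 1" shows "ss n * real n ^ 2 = (cc n)^2"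
proof -
  have p: "real n > 0" using assms by simp
  have e1: "real n powr 2 = real n ^ 2" using p by (simp add: powr_numeral)
  have "ss n * real n ^ 2 = real n powr (-1/2) * real n powr 2" unfolding ss_def e1 ..
  also have "\<dots> = real n powr (-1/2 + 2)" by (rule powr_add[symmetric])
  also have "\<dots> = real n powr (of_nat 2 * (3/4))" by simp
  also have "\<dots> = (cc n)^2" unfolding cc_def by (rule powr_power[symmetric]) (use p in simp)
  finally show ?thesis .
qed

lemma ss_cc6: assumes "n \<ge> 1" shows "ss n * real n ^ 5 = (cc n)^6"
proof -
  have p: "real n > 0" using assms by simp
  have e1: "real n powr 5 = real n ^ 5" using p by (simp add: powr_numeral)
  have "ss n * real n ^ 5 = real n powr (-1/2) * real n powr 5" unfolding ss_def e1 ..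
  also have "\<dots> = real n powr (-1/2 + 5)" by (rule powr_add[symmetric])
  also have "\<dots> = real n powr (of_nat 6 * (3/4))" by simp
  also have "\<dots> = (cc n)^6" unfolding cc_def by (rule powr_power[symmetric]) (use p in simp)
  finally show ?thesis .
qed

lemma E_gfun:
  assumes "n \<ge> 1"
  shows "5/4 * (mm n k)^2 / (real n)^2 + 4/45 * (mm n k)^6 / (real n)^5 = ss n * gfun (xk n k)"
proof -
  have c: "cc n > 0" using cc_pos assms by simp
  have p: "real n > 0" using assms by simp
  have a: "(mm n k)^2 / (real n)^2 = ss n * (mm n k)^2 / (cc n)^2"
    using ss_cc2[OF assms] c p by (simp add: field_simps)
  have b: "(mm n k)^6 / (real n)^5 = ss n * (mm n k)^6 / (cc n)^6"
    using ss_cc6[OF assms] c p by (simp add: field_simps)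
  have "5/4 * (mm n k)^2 / (real n)^2 + 4/45 * (mm n k)^6 / (real n)^5 = 5/4 * ((mm n k)^2 / (real n)^2) + 4/45 * ((mm n k)^6 / (real n)^5)" by simp
  also have "\<dots> = 5/4 * (ss n * (mm n k)^2 / (cc n)^2) + 4/45 * (ss n * (mm n k)^6 / (cc n)^6)" unfolding a b ..
  also have "\<dots> = ss n * gfun (xk n k)" unfolding gfun_def xk_def power_divide by (simp add: algebra_simps)
  finally show ?thesis .
qed

lemma exp_sub1: "\<bar>exp x - 1\<bar> \<le> \<bar>x\<bar> * exp \<bar>x\<bar>" for x :: real
proof (cases "x \<ge> 0")
  case True
  have "1 - x \<le> exp (-x)" using exp_ge_add_one_self[of "-x"] by simp
  hence "exp x * (1 - x) \<le> exp x * exp (-x)" by (intro mult_left_mono) auto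
  hence "exp x - 1 \<le> x * exp x" by (simp add: exp_minus field_simps)
  moreover have "0 \<le> exp x - 1" using True by simp
  ultimately show ?thesis using True by simp
next
  case False
  have a: "1 + x \<le> exp x" by (rule exp_ge_add_one_self)
  have e1: "exp x \<le> 1" using False by simp
  have "1 \<le> exp (-x)" using False by simp
  hence b: "-x * 1 \<le> -x * exp (-x)" using False by (intro mult_left_mono) auto
  have c: "\<bar>exp x - 1\<bar> = 1 - exp x" using e1 by simp
  have d: "\<bar>x\<bar> = -x" using False by simp
  show ?thesis unfolding c d using a b by linarith
qed

lemma exp_small: "\<bar>x\<bar> \<le> 1/20 \<Longrightarrow> exp \<bar>x\<bar> \<le> 11/10" for x :: real
proof -
  assume a: "\<bar>x\<bar> \<le> 1/20"
  have "norm (exp \<bar>x\<bar>) \<le> 1 + 2 * norm \<bar>x\<bar>" by (rule exp_bound_lemma) (use a in simp)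
  thus ?thesis using a by simp
qed

lemma exp_54: "exp (5/4 :: real) \<le> 8"
proof -
  have "exp (1/2 :: real) \<le> 2" using exp_bound_half[of "1/2::real"] by simp
  hence "exp (1/2::real) ^ 3 \<le> 2^3" by (intro power_mono) auto
  moreover have "exp (1/2::real) ^ 3 = exp (3/2)" by (simp add: exp_of_nat_mult[symmetric])
  ultimately have "exp (3/2::real) \<le> 8" by simp
  moreover have "exp (5/4::real) \<le> exp (3/2)" by simp
  ultimately show ?thesis by linarith
qed

lemma ak_bound:
  assumes n: "n \<ge> 1" and k: "k \<le> n" and R: "1 \<le> R" "R * cc n \<le> real n / 2" "ss n * gfun R \<le> 1/20"
  shows "\<bar>ak n k - ff (xk n k)\<bar> \<le> (if \<bar>xk n k\<bar> \<le> R then 11/10 * ss n * (ff (xk n k) * gfun (xk n k)) else 9 * exp (- (R^4) / 12))"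
proof -
  define E where "E = Lg n k - Lg n (k0 n)"
  have f0: "0 < ff (xk n k)" by (rule ff_pos)
  have eq: "\<bar>ak n k - ff (xk n k)\<bar> = ff (xk n k) * \<bar>exp E - 1\<bar>"
  proof -
    have "ak n k - ff (xk n k) = ff (xk n k) * (exp E - 1)" unfolding ak_def E_def by (simp add: algebra_simps)
    thus ?thesis using f0 by (simp add: abs_mult)
  qed
  have c: "cc n > 0" using cc_pos n by simp
  show ?thesis
  proof (cases "\<bar>xk n k\<bar> \<le> R")
    case True
    have "\<bar>mm n k\<bar> \<le> R * cc n" using True c unfolding xk_def by (simp add: abs_divide pos_divide_le_eq)
    hence mmn: "\<bar>mm n k\<bar> \<le> real n / 2" using R by linarith
    have "\<bar>E\<bar> \<le> 5/4 * (mm n k)^2 / (real n)^2 + 4/45 * (mm n k)^6 / (real n)^5"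
      unfolding E_def by (rule E_abs[OF k mmn n])
    hence E1: "\<bar>E\<bar> \<le> ss n * gfun (xk n k)" unfolding E_gfun[OF n] .
    have ss0: "0 \<le> ss n" unfolding ss_def by simp
    have "ss n * gfun (xk n k) \<le> ss n * gfun R" using gfun_mono[OF True] ss0 by (intro mult_left_mono) auto
    hence E2: "\<bar>E\<bar> \<le> 1/20" using E1 R by linarith
    have "\<bar>exp E - 1\<bar> \<le> \<bar>E\<bar> * exp \<bar>E\<bar>" by (rule exp_sub1)
    also have "\<dots> \<le> (ss n * gfun (xk n k)) * (11/10)"
      using E1 exp_small[OF E2] by (intro mult_mono) auto
    finally have "ff (xk n k) * \<bar>exp E - 1\<bar> \<le> ff (xk n k) * ((ss n * gfun (xk n k)) * (11/10))"
      using f0 by (rule mult_left_mono[OF _ less_imp_le])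
    also have "ff (xk n k) * ((ss n * gfun (xk n k)) * (11/10)) = 11/10 * ss n * (ff (xk n k) * gfun (xk n k))"
      by (simp only: mult_ac)
    finally show ?thesis using True eq by simp
  next
    case False
    have "\<bar>mm n k\<bar> \<le> real n" unfolding mm_def using k by (simp add: abs_le_iff)
    hence "\<bar>mm n k\<bar>^2 \<le> (real n)^2" by (intro power_mono) auto
    hence "(mm n k)^2 \<le> (real n)^2" by simp
    hence "(mm n k)^2 / (real n)^2 \<le> 1" using n by (simp add: divide_le_eq_1)
    hence "E \<le> 5/4" using E_upper[OF k n] unfolding E_def by linarith
    hence "exp E \<le> 8" using exp_54 by (meson exp_le_cancel_iff order_trans)
    hence a: "\<bar>exp E - 1\<bar> \<le> 9" unfolding abs_le_iff using exp_gt_zero[of E] by linarith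
    have b: "ff (xk n k) \<le> exp (- (R^4) / 12)" by (rule ff_tail) (use False R in auto)
    have "ff (xk n k) * \<bar>exp E - 1\<bar> \<le> exp (- (R^4) / 12) * 9" using a b f0 by (intro mult_mono) auto
    thus ?thesis using False eq by simp
  qed
qed


lemma Phi_jj:
  assumes n: "n \<ge> 1"
  shows "\<bar>Phi (bt n (jj n a)) - Phi a\<bar> \<le> hh n / 2 + tailb n"
proof -
  define j where "j = jj n a"
  have jn: "j \<le> n + 1" unfolding j_def by (rule jj_le[OF n])
  have h0: "0 < hh n" using hh_pos n by simp
  have tl0: "0 \<le> tailb n" unfolding tailb_def using GG_nonneg by simp
  have "\<bar>Phi (bt n j) - Phi a\<bar> \<le> hh n / 2 + tailb n"
  proof (cases "a \<le> bt n j")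
    case True
    have L: "0 \<le> Phi (bt n j) - Phi a" "Phi (bt n j) - Phi a \<le> bt n j - a" using Phi_lip[OF True] by auto
    show ?thesis
    proof (cases "j = 0")
      case True
      have "Phi (bt n j) - Phi a \<le> tailb n" using tails(1)[OF n] Phi_nonneg[of a] True by simp
      thus ?thesis using L h0 by simp
    next
      case False
      then obtain i where i: "j = Suc i" by (cases j) auto
      have "xk n i \<le> a" using jj_below[OF n, of i a] i unfolding j_def by simp
      moreover have "bt n j = xk n i + hh n / 2" unfolding i bt_Suc[OF n] xk_bt[OF n] by simp
      ultimately have "bt n j - a \<le> hh n / 2" by simp
      thus ?thesis using L tl0 by simp
    qed
  next
    case False
    hence F: "bt n j \<le> a" by simp
    have L: "0 \<le> Phi a - Phi (bt n j)" "Phi a - Phi (bt n j) \<le> a - bt n j" using Phi_lip[OF F] by auto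
    show ?thesis
    proof (cases "j \<le> n")
      case True
      have "a < xk n j" using jj_above[OF n, of a j] True unfolding j_def by simp
      hence "a - bt n j \<le> hh n / 2" unfolding xk_bt[OF n] by simp
      thus ?thesis using L tl0 by simp
    next
      case False
      hence "j = n + 1" using jn by simp
      hence "Phi a - Phi (bt n j) \<le> tailb n" using tails(2)[OF n] Phi_le_ZZ[of a] by simp
      thus ?thesis using L h0 by simp
    qed
  qed
  thus ?thesis unfolding j_def .
qed

lemma D_bound:
  assumes n: "n \<ge> 1" and R: "1 \<le> R" "hh n \<le> 1" "R * cc n \<le> real n / 2" "ss n * gfun R \<le> 1/20"
  shows "hh n * (\<Sum>k\<le>n. \<bar>ak n k - ff (xk n k)\<bar>)
     \<le> 11/10 * ss n * (287/80 * ZZ + errg n R) + 9 * (real n + 1) * hh n * exp (- (R^4) / 12)"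
proof -
  have h0: "0 < hh n" using hh_pos n by simp
  have ss0: "0 \<le> ss n" unfolding ss_def by simp
  have "(\<Sum>k\<le>n. \<bar>ak n k - ff (xk n k)\<bar>) \<le> (\<Sum>k\<le>n. 11/10 * ss n * (ff (xk n k) * gfun (xk n k)) + 9 * exp (- (R^4) / 12))"
  proof (rule sum_mono)
    fix k assume "k \<in> {..n}"
    hence k: "k \<le> n" by simp
    have p: "0 \<le> 11/10 * ss n * (ff (xk n k) * gfun (xk n k))"
      using ss0 ff_pos[of "xk n k"] gfun_nonneg[of "xk n k"] by simp
    show "\<bar>ak n k - ff (xk n k)\<bar> \<le> 11/10 * ss n * (ff (xk n k) * gfun (xk n k)) + 9 * exp (- (R^4) / 12)"
    proof -
      have q: "0 \<le> 9 * exp (- (R^4) / 12)" by simp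
      have b: "(if \<bar>xk n k\<bar> \<le> R then 11/10 * ss n * (ff (xk n k) * gfun (xk n k)) else 9 * exp (- (R^4) / 12))
          \<le> 11/10 * ss n * (ff (xk n k) * gfun (xk n k)) + 9 * exp (- (R^4) / 12)" using p q by simp
      show ?thesis using ak_bound[OF n k R(1,3,4)] b by linarith
    qed
  qed
  also have "\<dots> = 11/10 * ss n * (\<Sum>k\<le>n. ff (xk n k) * gfun (xk n k)) + 9 * exp (- (R^4) / 12) * (real n + 1)"
    by (simp add: sum.distrib sum_distrib_left)
  finally have "hh n * (\<Sum>k\<le>n. \<bar>ak n k - ff (xk n k)\<bar>) \<le> hh n * (11/10 * ss n * (\<Sum>k\<le>n. ff (xk n k) * gfun (xk n k)) + 9 * exp (- (R^4) / 12) * (real n + 1))"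
    using h0 by (intro mult_left_mono) auto
  also have "\<dots> = 11/10 * ss n * (\<Sum>k\<le>n. hh n * (ff (xk n k) * gfun (xk n k))) + 9 * (real n + 1) * hh n * exp (- (R^4) / 12)"
    by (simp add: sum_distrib_left algebra_simps)
  also have "\<dots> \<le> 11/10 * ss n * (287/80 * ZZ + errg n R) + 9 * (real n + 1) * hh n * exp (- (R^4) / 12)"
    using errg_ok[OF n R(1,2)] ss0 by (intro add_right_mono mult_left_mono) auto
  finally show ?thesis .
qed


lemma main_n:
  assumes n: "n \<ge> 1" and R1: "1 \<le> R" and h1: "hh n \<le> 1" and K3: "R * cc n \<le> real n / 2"
    and K4: "ss n * gfun R \<le> 1/20" and K5: "errf n R \<le> ZZ * ss n / 200" and K6: "hh n / 2 \<le> ZZ * ss n / 200"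
    and K7: "tailb n \<le> ZZ * ss n / 200" and K8: "9 * (real n + 1) * hh n * exp (- (R^4) / 12) \<le> ZZ * ss n / 200"
    and K9: "errg n R \<le> ZZ / 100" and K10: "ss n \<le> 1/100"
  shows "\<bar>cw_prob n (\<lambda>\<sigma>. magnetization n \<sigma> / real n powr (3/4) \<le> a) - W_inf_cdf a\<bar> \<le> 11 * ss n"
proof -
  define h where "h = hh n"
  define s where "s = ss n"
  define Z where "Z = ZZ"
  define j where "j = jj n a"
  define S where "S = (\<Sum>k\<le>n. h * ff (xk n k))"
  define N where "N = (\<Sum>k<j. h * ff (xk n k))"
  define B where "B = (\<Sum>k\<le>n. ff (xk n k))"
  define D where "D = (\<Sum>k\<le>n. \<bar>ak n k - ff (xk n k)\<bar>)"
  have h0: "0 < h" unfolding h_def using hh_pos n by simp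
  have Z0: "0 < Z" unfolding Z_def by (rule ZZ_pos)
  have s0: "0 < s" unfolding s_def ss_def using n by simp
  have jn: "j \<le> n + 1" unfolding j_def by (rule jj_le[OF n])
  have tl0: "0 \<le> tailb n" unfolding tailb_def using GG_nonneg by simp
  have rS: "\<bar>S - (Phi (bt n (n+1)) - Phi (bt n 0))\<bar> \<le> errf n R"
    using errf_ok[OF n R1 h1, of "n+1"] unfolding S_def h_def by (simp add: lessThan_Suc_atMost)
  have rN: "\<bar>N - (Phi (bt n j) - Phi (bt n 0))\<bar> \<le> errf n R"
    using errf_ok[OF n R1 h1 jn] unfolding N_def h_def .
  have t0: "0 \<le> Phi (bt n 0)" "Phi (bt n 0) \<le> tailb n" using Phi_nonneg tails(1)[OF n] by auto
  have t1: "Phi (bt n (n+1)) \<le> Z" "Z - Phi (bt n (n+1)) \<le> tailb n" using Phi_le_ZZ tails(2)[OF n] unfolding Z_def by auto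
  have pj: "\<bar>Phi (bt n j) - Phi a\<bar> \<le> h / 2 + tailb n" using Phi_jj[OF n, of a] unfolding j_def h_def .
  have SZ: "\<bar>S - Z\<bar> \<le> errf n R + 2 * tailb n" using rS t0 t1 unfolding abs_le_iff by linarith
  have NP: "\<bar>N - Phi a\<bar> \<le> errf n R + h / 2 + 2 * tailb n" using rN t0 pj unfolding abs_le_iff by linarith
  have K5': "errf n R \<le> Z * s / 200" and K6': "h / 2 \<le> Z * s / 200" and K7': "tailb n \<le> Z * s / 200"
    using K5 K6 K7 unfolding Z_def s_def h_def by auto
  have Zs: "Z * s \<le> Z / 100" using K10 Z0 unfolding s_def by (simp add: mult_left_mono)
  have S_low: "S \<ge> 99/100 * Z" using SZ K5' K7' Zs unfolding abs_le_iff by linarith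
  hence S0: "0 < S" using Z0 by simp
  have QF: "\<bar>N / S - Phi a / Z\<bar> \<le> (\<bar>N - Phi a\<bar> + \<bar>S - Z\<bar>) / S"
    by (rule ratio_bound[OF S0 Z0 Phi_nonneg]) (simp add: Z_def Phi_le_ZZ)
  also have "\<dots> \<le> (7/200 * (Z * s)) / (99/100 * Z)"
  proof (rule frac_le)
    show "0 \<le> 7/200 * (Z * s)" using Z0 s0 by simp
    show "\<bar>N - Phi a\<bar> + \<bar>S - Z\<bar> \<le> 7/200 * (Z * s)" using NP SZ K5' K6' K7' by linarith
    show "0 < 99/100 * Z" using Z0 by simp
    show "99/100 * Z \<le> S" by (rule S_low)
  qed
  also have "\<dots> = 7/198 * s" using Z0 by (simp add: field_simps)
  finally have QF': "\<bar>N / S - Phi a / Z\<bar> \<le> 7/198 * s" .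
  have P: "cw_prob n (\<lambda>\<sigma>. magnetization n \<sigma> / real n powr (3/4) \<le> a) = (\<Sum>k<j. ak n k) / (\<Sum>k\<le>n. ak n k)"
    unfolding j_def by (rule P_eq[OF n])
  have Q: "N / S = (\<Sum>k<j. ff (xk n k)) / B"
    unfolding N_def S_def B_def sum_distrib_left[symmetric] using h0 by simp
  have hD: "h * D \<le> 11/10 * s * (287/80 * Z + errg n R) + 9 * (real n + 1) * h * exp (- (R^4) / 12)"
    using D_bound[OF n R1 h1 K3 K4] unfolding h_def D_def s_def Z_def .
  have hD': "h * D \<le> 4 * (Z * s)"
  proof -
    have a1: "errg n R \<le> Z / 100" using K9 unfolding Z_def .
    have "11/10 * s * (287/80 * Z + errg n R) \<le> 11/10 * s * (287/80 * Z + Z / 100)"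
      using a1 s0 by (intro mult_left_mono add_left_mono) auto
    also have "\<dots> = 11/10 * (287/80 + 1/100) * (Z * s)" by (simp add: algebra_simps)
    finally have "11/10 * s * (287/80 * Z + errg n R) \<le> 11/10 * (287/80 + 1/100) * (Z * s)" .
    moreover have "9 * (real n + 1) * h * exp (- (R^4) / 12) \<le> Z * s / 200" using K8 unfolding h_def Z_def s_def .
    moreover have "0 \<le> Z * s" using Z0 s0 by simp
    ultimately show ?thesis using hD by argo
  qed
  have hB: "h * B = S" unfolding B_def S_def by (simp add: sum_distrib_left)
  have D0: "0 \<le> D" unfolding D_def by (simp add: sum_nonneg)
  have hDS: "h * D < S" using hD' S_low Zs Z0 by linarith
  hence DB: "D < B" using hB h0 by (metis mult_less_cancel_left_pos)
  have tv: "\<bar>(\<Sum>k<j. ak n k) / (\<Sum>k\<le>n. ak n k) - (\<Sum>k<j. ff (xk n k)) / B\<bar> \<le> 2 * D / (B - D)"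
    unfolding B_def D_def
  proof (rule tv_bound)
    show "\<And>k. k \<in> {..n} \<Longrightarrow> 0 \<le> ak n k" unfolding ak_def using ff_pos by (simp add: less_imp_le)
    show "\<And>k. k \<in> {..n} \<Longrightarrow> 0 \<le> ff (xk n k)" using ff_pos by (simp add: less_imp_le)
    show "{..<j} \<subseteq> {..n}" using jn by auto
    show "(\<Sum>k\<le>n. \<bar>ak n k - ff (xk n k)\<bar>) < (\<Sum>k\<le>n. ff (xk n k))" using DB unfolding B_def D_def .
  qed simp
  have SB: "S - h * D = h * (B - D)" using hB by (simp add: algebra_simps)
  have "2 * D / (B - D) = 2 * (h * D) / (S - h * D)"
    unfolding SB using h0 DB by (simp add: field_simps)
  also have "\<dots> \<le> 2 * (4 * (Z * s)) / (95/100 * Z)"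
  proof (rule frac_le)
    show "0 \<le> 2 * (4 * (Z * s))" using Z0 s0 by simp
    show "2 * (h * D) \<le> 2 * (4 * (Z * s))" using hD' by linarith
    show "0 < 95/100 * Z" using Z0 by simp
    show "95/100 * Z \<le> S - h * D" using hD' S_low Zs by linarith
  qed
  also have "\<dots> = 160/19 * s" using Z0 by (simp add: field_simps)
  finally have PQ: "2 * D / (B - D) \<le> 160/19 * s" .
  have "\<bar>cw_prob n (\<lambda>\<sigma>. magnetization n \<sigma> / real n powr (3/4) \<le> a) - W_inf_cdf a\<bar>
      \<le> \<bar>(\<Sum>k<j. ak n k) / (\<Sum>k\<le>n. ak n k) - N / S\<bar> + \<bar>N / S - Phi a / Z\<bar>"
    unfolding P W_inf_cdf_eq Z_def
    using abs_triangle_ineq[of "(\<Sum>k<j. ak n k) / (\<Sum>k\<le>n. ak n k) - N / S" "N / S - Phi a / ZZ"] by simp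
  also have "\<dots> \<le> 160/19 * s + 7/198 * s" using tv PQ QF' unfolding Q by linarith
  also have "\<dots> \<le> 11 * s" using s0 by simp
  finally show ?thesis unfolding s_def .
qed


lemma ev_le:
  fixes g :: "nat \<Rightarrow> real"
  assumes "(g \<longlongrightarrow> 0) sequentially" "0 < C"
  shows "eventually (\<lambda>n. g n \<le> C) sequentially"
  using order_tendstoD(2)[OF assms] by (auto elim: eventually_mono)

lemma ev_le_ss:
  fixes f :: "nat \<Rightarrow> real"
  assumes "((\<lambda>n. f n / real n powr (-1/2)) \<longlongrightarrow> 0) sequentially" "0 < C"
  shows "eventually (\<lambda>n. f n \<le> C * ss n) sequentially"
proof -
  have "eventually (\<lambda>n. f n / real n powr (-1/2) \<le> C \<and> n \<ge> 1) sequentially"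
    using ev_le[OF assms] eventually_ge_at_top[of 1] by (auto elim: eventually_conj)
  thus ?thesis
  proof (rule eventually_mono)
    fix n :: nat assume a: "f n / real n powr (-1/2) \<le> C \<and> n \<ge> 1"
    hence p: "real n powr (-1/2) > 0" by simp
    have "f n \<le> C * real n powr (-1/2)" using pos_divide_le_eq[OF p, of "f n" C] a by (simp add: mult.commute)
    thus "f n \<le> C * ss n" unfolding ss_def .
  qed
qed

definition RR :: "nat \<Rightarrow> real" where "RR n = real n powr (1/40)"

lemma ev_conds:
  "eventually (\<lambda>n. n \<ge> 1 \<and> 1 \<le> RR n \<and> hh n \<le> 1 \<and> RR n * cc n \<le> real n / 2
     \<and> ss n * gfun (RR n) \<le> 1/20 \<and> errf n (RR n) \<le> ZZ / 200 * ss n \<and> hh n / 2 \<le> ZZ / 200 * ss n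
     \<and> tailb n \<le> ZZ / 200 * ss n \<and> 9 * (real n + 1) * hh n * exp (- ((RR n)^4) / 12) \<le> ZZ / 200 * ss n
     \<and> errg n (RR n) \<le> ZZ / 100 \<and> ss n \<le> 1/100) sequentially"
proof -
  have Z: "0 < ZZ / 200" "0 < ZZ / 100" using ZZ_pos by auto
  have e1: "eventually (\<lambda>n. n \<ge> (1::nat)) sequentially" by (rule eventually_ge_at_top)
  have e2: "eventually (\<lambda>n. 1 \<le> RR n) sequentially"
  proof -
    have "filterlim (\<lambda>n::nat. real n powr (1/40)) at_top sequentially" by real_asymp
    thus ?thesis unfolding RR_def by (simp add: filterlim_at_top)
  qed
  have e3: "eventually (\<lambda>n. hh n \<le> 1) sequentially"
    by (rule ev_le) (unfold hh_def cc_def, real_asymp, simp)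
  have e4: "eventually (\<lambda>n. RR n * cc n \<le> real n / 2) sequentially"
  proof -
    have "eventually (\<lambda>n. real n powr (1/40) * real n powr (3/4) / real n \<le> 1/2) sequentially"
      by (rule ev_le) (real_asymp, simp)
    thus ?thesis using e1 unfolding RR_def cc_def
      by eventually_elim (simp add: divide_le_eq)
  qed
  have e5: "eventually (\<lambda>n. ss n * gfun (RR n) \<le> 1/20) sequentially"
    by (rule ev_le) (unfold ss_def gfun_def RR_def, real_asymp, simp)
  have e6: "eventually (\<lambda>n. errf n (RR n) \<le> ZZ / 200 * ss n) sequentially"
    by (rule ev_le_ss[OF _ Z(1)]) (unfold errf_def hh_def cc_def RR_def, real_asymp)
  have e7: "eventually (\<lambda>n. hh n / 2 \<le> ZZ / 200 * ss n) sequentially"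
    by (rule ev_le_ss[OF _ Z(1)]) (unfold hh_def cc_def, real_asymp)
  have e8: "eventually (\<lambda>n. tailb n \<le> ZZ / 200 * ss n) sequentially"
  proof -
    have "eventually (\<lambda>n. exp (- real n / 24) \<le> (ZZ / 200 / (GG + 1)) * ss n) sequentially"
      by (rule ev_le_ss) (real_asymp, use ZZ_pos GG_nonneg in simp)
    thus ?thesis
    proof (rule eventually_mono)
      fix n assume a: "exp (- real n / 24) \<le> (ZZ / 200 / (GG + 1)) * ss n"
      have s0: "0 \<le> ss n" unfolding ss_def by simp
      have "tailb n = GG * exp (- real n / 24)" unfolding tailb_def ..
      also have "\<dots> \<le> GG * ((ZZ / 200 / (GG + 1)) * ss n)" using a GG_nonneg by (intro mult_left_mono) auto
      also have "\<dots> = (GG / (GG + 1)) * (ZZ / 200 * ss n)" using GG_nonneg by (simp add: field_simps)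
      also have "\<dots> \<le> 1 * (ZZ / 200 * ss n)"
        using GG_nonneg ZZ_pos s0 by (intro mult_right_mono) auto
      finally show "tailb n \<le> ZZ / 200 * ss n" by simp
    qed
  qed
  have e9: "eventually (\<lambda>n. 9 * (real n + 1) * hh n * exp (- ((RR n)^4) / 12) \<le> ZZ / 200 * ss n) sequentially"
    by (rule ev_le_ss[OF _ Z(1)]) (unfold hh_def cc_def RR_def, real_asymp)
  have e10: "eventually (\<lambda>n. errg n (RR n) \<le> ZZ / 100) sequentially"
    by (rule ev_le[OF _ Z(2)]) (unfold errg_def hh_def cc_def RR_def gfun_def, real_asymp)
  have e11: "eventually (\<lambda>n. ss n \<le> 1/100) sequentially"
    by (rule ev_le) (unfold ss_def, real_asymp, simp)
  show ?thesis using e1 e2 e3 e4 e5 e6 e7 e8 e9 e10 e11 by eventually_elim auto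
qed

theorem theorem4p4:
  shows "\<forall>\<^sub>F n in sequentially.
           (SUP a\<in>(UNIV::real set). \<bar>cw_prob n (\<lambda>\<sigma>. magnetization n \<sigma> / real n powr (3/4) \<le> a) - W_inf_cdf a\<bar>)
             \<le> 11 * real n powr (-1/2)"
  using ev_conds
proof eventually_elim
  case (elim n)
  have b: "\<bar>cw_prob n (\<lambda>\<sigma>. magnetization n \<sigma> / real n powr (3/4) \<le> a) - W_inf_cdf a\<bar> \<le> 11 * ss n" for a
    by (rule main_n) (use elim in \<open>auto simp: mult.commute\<close>)
  show ?case unfolding ss_def[symmetric] by (rule cSUP_least) (use b in auto)
qed


end
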